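(* Let $\mathbb{Z}$ be a finite-dimensional Euclidean space, $E:\mathbb{Z}\rightrightarrows\mathbb{Z}$ maximally monotone, and $F_i:\mathbb{Z}\to\mathbb{Z}$ ($i=1,\dots,N$) maximally monotone and $\frac1{L_0}$-co-coercive, $L_0>0$; let $F=\frac1N\sum_{i=1}^N F_i$. Let $\alpha\in(0,4/L_0)$, $L:=\frac{4}{\alpha(4-\alpha L_0)}$, and $G(z):=\frac1\alpha\big(z-J_{\alpha E}(z-\alpha F(z))\big)$; assume $G(z^* )=0$ for some $z^*$. Let $\sigma_k,\gamma_k\ge0$ and let $\{z^k\}$ be generated from $z^0$ by: for $k\ge0$, (i) take a stochastic estimator $\widetilde F(z^k)$ with $\mathbb{E}\|F(z^k)-\widetilde F(z^k)\|^2\le\frac12\sigma_k^2$; (ii) take $\bar z^k$ with $\|J_{\alpha E}(z^k-\alpha\widetilde F(z^k))-\bar z^k\|\le\frac{\sqrt2}{2}\alpha\gamma_k$; (iii) set $\tilde z^k=\frac1\alpha(z^k-\bar z^k)$ and $z^{k+1}=\beta_kz^0+(1-\beta_k)z^k-\eta_k\tilde z^k$, with $\beta_k=1/(k+2)$, $\eta_k=(1-\beta_k)/L$. Then for all $k\ge0$, \[ \mathbb{E}\|G(z^k)\|^2\le\frac{\Big(7L\|z^0-z^*\|+10\sqrt{\sum_{i=0}^{k-1}(i+1)^2(\sigma_i+\gamma_i)^2}\Big)^2}{(k+1)(k+2)},\quad \mathbb{E}\|z^{k+1}-z^k\|^2\le\frac{8\Big(7L\|z^0-z^*\|+11\sqrt{\sum_{i=0}^{k}(i+1)^2(\sigma_i+\gamma_i)^2}\Big)^2}{L^2(k+1)(k+2)}.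 \]
   Context: $c$-co-coercive means $\langle F(x_1)-F(x_2),x_1-x_2\rangle\ge c\|F(x_1)-F(x_2)\|^2$. $J_{\alpha E}=(I+\alpha E)^{-1}$ is the resolvent (single-valued). $\mathbb{E}$ denotes expectation with respect to all randomness in the iterations. *)

theory Defs
  imports "HOL-Analysis.Analysis" "HOL-Probability.Probability"
begin

definition monotone_op :: "('a::real_inner \<Rightarrow> 'a set) \<Rightarrow> bool" where
  "monotone_op A \<longleftrightarrow>
     (\<forall>x y u v. u \<in> A x \<longrightarrow> v \<in> A y \<longrightarrow> inner (u - v) (x - y) \<ge> 0)"

definition max_monotone_op :: "('a::real_inner \<Rightarrow> 'a set) \<Rightarrow> bool" where
  "max_monotone_op A \<longleftrightarrow> monotone_op A \<and>
     (\<forall>B. monotone_op B \<and> (\<forall>x. A x \<subseteq> B x) \<longrightarrow> B = A)"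

definition sv_op :: "('a \<Rightarrow> 'a) \<Rightarrow> 'a \<Rightarrow> 'a set" where
  "sv_op f = (\<lambda>x. {f x})"

definition cocoercive :: "real \<Rightarrow> ('a::real_inner \<Rightarrow> 'a) \<Rightarrow> bool" where
  "cocoercive c f \<longleftrightarrow>
     (\<forall>x1 x2. inner (f x1 - f x2) (x1 - x2) \<ge> c * (norm (f x1 - f x2))\<^sup>2)"

text \<open>Resolvent J_{\<alpha>E} = (I + \<alpha>E)^{-1}: J x is the (unique, for maximally monotone E)
  y with x \<in> y + \<alpha> E(y).\<close>
definition resolvent :: "real \<Rightarrow> ('a::real_inner \<Rightarrow> 'a set) \<Rightarrow> 'a \<Rightarrow> 'a" where
  "resolvent \<alpha> E x = (THE y. (1 / \<alpha>) *\<^sub>R (x - y) \<in> E y)"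

end

theory Submission
  imports Defs
begin


lemma ineq_lin_quad:
  fixes D Q :: real
  assumes "\<And>t. 0 < t \<Longrightarrow> t \<le> 1 \<Longrightarrow> 0 \<le> t * D + t\<^sup>2 * Q" "Q \<ge> 0"
  shows "D \<ge> 0"
proof (rule ccontr)
  assume D: "\<not> D \<ge> 0"
  show False
  proof (cases "Q = 0")
    case True then show False using assms(1)[of 1] D by simp
  next
    case False
    hence Q: "Q > 0" using assms(2) by simp
    define t where "t = min 1 (- D / (2*Q))"
    have t0: "t > 0" using D Q by (simp add: t_def field_simps)
    have t1: "t \<le> 1" by (simp add: t_def)
    have "t \<le> - D / (2*Q)" by (simp add: t_def)
    hence "t * (2*Q) \<le> (- D / (2*Q)) * (2*Q)" by (rule mult_right_mono) (use Q in auto)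
    also have "\<dots> = - D" using Q by simp
    finally have "t * (2*Q) \<le> - D" .
    hence tQ: "t * Q \<le> - D / 2" by simp
    have "t * D + t\<^sup>2 * Q = t * (D + t * Q)" by (simp add: power2_eq_square algebra_simps)
    also have "\<dots> < 0" using t0 D tQ by (intro mult_pos_neg) auto
    finally show False using assms(1)[OF t0 t1] by simp
  qed
qed

lemma weighted_mono_nonneg:
  fixes P :: "('z::real_inner \<times> 'z) set"
  assumes fin: "finite P"
    and mono: "\<And>p q. p \<in> P \<Longrightarrow> q \<in> P \<Longrightarrow> inner (snd p - snd q) (fst p - fst q) \<ge> 0"
    and mu: "\<And>p. p \<in> P \<Longrightarrow> mu p \<ge> 0" and mu1: "sum mu P = 1"
  shows "(\<Sum>p\<in>P. mu p * inner (snd p) (fst p - (\<Sum>q\<in>P. mu q *\<^sub>R fst q))) \<ge> 0"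
proof -
  define T where "T = (\<Sum>p\<in>P. \<Sum>q\<in>P. mu p * mu q * inner (snd p) (fst p - fst q))"
  have eq1: "(\<Sum>p\<in>P. mu p * inner (snd p) (fst p - (\<Sum>q\<in>P. mu q *\<^sub>R fst q))) = T"
  proof -
    have "\<And>p::'z\<times>'z. fst p - (\<Sum>q\<in>P. mu q *\<^sub>R fst q) = (\<Sum>q\<in>P. mu q *\<^sub>R (fst p - fst q))"
    proof -
      fix p :: "'z \<times> 'z"
      have "(\<Sum>q\<in>P. mu q *\<^sub>R (fst p - fst q)) = (\<Sum>q\<in>P. mu q) *\<^sub>R fst p - (\<Sum>q\<in>P. mu q *\<^sub>R fst q)"
        by (simp add: scaleR_right_diff_distrib sum_subtractf scaleR_sum_left)
      thus "fst p - (\<Sum>q\<in>P. mu q *\<^sub>R fst q) = (\<Sum>q\<in>P. mu q *\<^sub>R (fst p - fst q))" using mu1 by simp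
    qed
    thus ?thesis unfolding T_def by (simp add: inner_sum_right sum_distrib_left mult.assoc)
  qed
  have "T = (\<Sum>q\<in>P. \<Sum>p\<in>P. mu p * mu q * inner (snd p) (fst p - fst q))"
    unfolding T_def by (rule sum.swap)
  hence T2: "T = (\<Sum>p\<in>P. \<Sum>q\<in>P. mu q * mu p * inner (snd q) (fst q - fst p))" by simp
  have "2 * T = (\<Sum>p\<in>P. \<Sum>q\<in>P. mu p * mu q * inner (snd p - snd q) (fst p - fst q))"
  proof -
    have "2 * T = T + T" by simp
    also have "\<dots> = (\<Sum>p\<in>P. \<Sum>q\<in>P. mu p * mu q * inner (snd p) (fst p - fst q)
                          + mu q * mu p * inner (snd q) (fst q - fst p))"
      by (subst T2) (simp add: T_def sum.distrib)
    also have "\<dots> = (\<Sum>p\<in>P. \<Sum>q\<in>P. mu p * mu q * inner (snd p - snd q) (fst p - fst q))"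
      by (intro sum.cong refl) (simp add: inner_diff_left inner_diff_right algebra_simps)
    finally show ?thesis .
  qed
  also have "\<dots> \<ge> 0" using mu mono by (intro sum_nonneg) auto
  finally show ?thesis using eq1 by simp
qed



lemma norm_seg_sq:
  fixes s p :: "'a::real_inner"
  shows "(norm (s + t *\<^sub>R (p - s)))\<^sup>2 = (norm s)\<^sup>2 + 2 * t * inner s (p - s) + t\<^sup>2 * (norm (p - s))\<^sup>2"
proof -
  have "(norm (s + t *\<^sub>R (p - s)))\<^sup>2 = inner (s + t *\<^sub>R (p - s)) (s + t *\<^sub>R (p - s))"
    by (simp add: power2_norm_eq_inner)
  also have "\<dots> = inner s s + 2 * t * inner s (p - s) + t\<^sup>2 * inner (p - s) (p - s)"
    by (simp add: inner_add_left inner_add_right inner_commute power2_eq_square algebra_simps)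
  finally show ?thesis by (simp add: power2_norm_eq_inner)
qed

lemma finite_core:
  fixes P :: "('z::euclidean_space \<times> 'z) set" and x0 :: 'z
  assumes fin: "finite P" and ne: "P \<noteq> {}"
    and mono: "\<And>p q. p \<in> P \<Longrightarrow> q \<in> P \<Longrightarrow> inner (snd p - snd q) (fst p - fst q) \<ge> 0"
  shows "\<exists>y. \<forall>p\<in>P. inner (x0 - y - snd p) (y - fst p) \<ge> 0"
proof -
  define f where "f = (\<lambda>p::'z\<times>'z. (x0 - snd p + fst p, inner (x0 - snd p) (fst p)))"
  define H where "H = (\<lambda>v::'z\<times>real. (norm (fst v))\<^sup>2 / 4 - snd v)"
  define C where "C = convex hull (f ` P)"
  have "compact C" by (simp add: C_def fin finite_imp_compact_convex_hull)
  moreover have "C \<noteq> {}" using ne by (simp add: C_def)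
  moreover have "continuous_on C H" unfolding H_def by (intro continuous_intros) auto
  ultimately obtain v where v: "v \<in> C" and vmin: "\<And>u. u \<in> C \<Longrightarrow> H v \<le> H u"
    using continuous_attains_inf[of C H] by blast
  define K where "K = {v. \<exists>mu. (\<forall>p\<in>P. mu p \<ge> 0) \<and> sum mu P = 1 \<and> v = (\<Sum>p\<in>P. mu p *\<^sub>R f p)}"
  have "convex K"
    unfolding convex_def
  proof (intro ballI allI impI)
    fix u1 u2 and a b :: real
    assume "u1 \<in> K" "u2 \<in> K" and ab: "0 \<le> a" "0 \<le> b" "a + b = 1"
    then obtain m1 m2 where m1: "\<forall>p\<in>P. m1 p \<ge> 0" "sum m1 P = 1" "u1 = (\<Sum>p\<in>P. m1 p *\<^sub>R f p)"
      and m2: "\<forall>p\<in>P. m2 p \<ge> 0" "sum m2 P = 1" "u2 = (\<Sum>p\<in>P. m2 p *\<^sub>R f p)"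
      unfolding K_def by blast
    show "a *\<^sub>R u1 + b *\<^sub>R u2 \<in> K" unfolding K_def
    proof (intro CollectI exI conjI ballI)
      show "\<And>p. p \<in> P \<Longrightarrow> 0 \<le> a * m1 p + b * m2 p" using m1 m2 ab by auto
      show "(\<Sum>p\<in>P. a * m1 p + b * m2 p) = 1"
        using m1 m2 ab by (simp add: sum.distrib sum_distrib_left[symmetric])
      show "a *\<^sub>R u1 + b *\<^sub>R u2 = (\<Sum>p\<in>P. (a * m1 p + b * m2 p) *\<^sub>R f p)"
        using m1 m2 by (simp add: scaleR_add_left sum.distrib scaleR_sum_right)
    qed
  qed
  have "f ` P \<subseteq> K"
  proof
    fix u assume "u \<in> f ` P"
    then obtain p where p: "p \<in> P" "u = f p" by blast
    show "u \<in> K" unfolding K_def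
    proof (intro CollectI exI conjI ballI)
      show "\<And>q. q \<in> P \<Longrightarrow> 0 \<le> (if q = p then 1 else 0::real)" by simp
      show "(\<Sum>q\<in>P. (if q = p then 1 else 0::real)) = 1" using p fin by simp
      show "u = (\<Sum>q\<in>P. (if q = p then 1 else 0::real) *\<^sub>R f q)" using p fin
        by (simp add: if_distrib[of "\<lambda>c. c *\<^sub>R _"] cong: if_cong)
    qed
  qed
  hence "C \<subseteq> K" unfolding C_def using \<open>convex K\<close> by (rule hull_minimal)
  have H0: "H v \<ge> 0"
  proof -
    from v \<open>C \<subseteq> K\<close> obtain mu where mu: "\<forall>p\<in>P. mu p \<ge> 0" "sum mu P = 1"
       and vdef: "v = (\<Sum>p\<in>P. mu p *\<^sub>R f p)" unfolding K_def by blast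
    define xb where "xb = (\<Sum>p\<in>P. mu p *\<^sub>R fst p)"
    define W where "W = (\<Sum>p\<in>P. mu p *\<^sub>R snd p)"
    have s: "fst v = x0 - W + xb"
    proof -
      have "fst v = (\<Sum>p\<in>P. mu p *\<^sub>R (x0 - snd p + fst p))"
        by (simp add: vdef f_def fst_sum)
      also have "\<dots> = (\<Sum>p\<in>P. mu p) *\<^sub>R x0 - W + xb"
        by (simp add: W_def xb_def scaleR_add_right scaleR_diff_right sum.distrib sum_subtractf scaleR_sum_left)
      finally show ?thesis using mu by simp
    qed
    have c: "snd v = inner x0 xb - (\<Sum>p\<in>P. mu p * inner (snd p) (fst p))"
    proof -
      have "snd v = (\<Sum>p\<in>P. mu p * inner (x0 - snd p) (fst p))"
        by (simp add: vdef f_def snd_sum)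
      also have "\<dots> = inner x0 xb - (\<Sum>p\<in>P. mu p * inner (snd p) (fst p))"
        by (simp add: xb_def inner_sum_right inner_diff_left right_diff_distrib sum_subtractf)
      finally show ?thesis .
    qed
    have "H v - (inner (fst v) xb - (norm xb)\<^sup>2 - snd v) = (norm ((1/2) *\<^sub>R fst v - xb))\<^sup>2"
      unfolding H_def by (simp add: power2_norm_eq_inner inner_diff_left inner_diff_right inner_commute algebra_simps)
    hence "H v \<ge> inner (fst v) xb - (norm xb)\<^sup>2 - snd v"
      by (metis diff_ge_0_iff_ge zero_le_power2)
    moreover have "inner (fst v) xb - (norm xb)\<^sup>2 - snd v
        = (\<Sum>p\<in>P. mu p * inner (snd p) (fst p - xb))"
    proof -
      have "inner W xb = (\<Sum>p\<in>P. mu p * inner (snd p) xb)"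
        by (simp add: W_def inner_sum_left)
      thus ?thesis using s c
        by (simp add: power2_norm_eq_inner inner_diff_left inner_diff_right inner_add_left
             sum_subtractf right_diff_distrib)
    qed
    moreover have "(\<Sum>p\<in>P. mu p * inner (snd p) (fst p - xb)) \<ge> 0"
      unfolding xb_def using fin mono mu by (intro weighted_mono_nonneg) auto
    ultimately show ?thesis by linarith
  qed
  define y where "y = (1/2) *\<^sub>R fst v"
  show ?thesis
  proof (intro exI ballI)
    fix p assume p: "p \<in> P"
    have fpC: "f p \<in> C" unfolding C_def using p by (intro hull_inc) auto
    define D where "D = inner (fst v) (fst (f p) - fst v) / 2 - (snd (f p) - snd v)"
    define Q where "Q = (norm (fst (f p) - fst v))\<^sup>2 / 4"
    have "\<And>t. 0 < t \<Longrightarrow> t \<le> 1 \<Longrightarrow> 0 \<le> t * D + t\<^sup>2 * Q"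
    proof -
      fix t :: real assume t: "0 < t" "t \<le> 1"
      have "(1 - t) *\<^sub>R v + t *\<^sub>R f p \<in> C"
        using v fpC t unfolding C_def by (intro convexD convex_convex_hull) auto
      hence "H v \<le> H ((1 - t) *\<^sub>R v + t *\<^sub>R f p)" by (rule vmin)
      also have "H ((1 - t) *\<^sub>R v + t *\<^sub>R f p) = H v + (t * D + t\<^sup>2 * Q)"
      proof -
        have e1: "fst ((1 - t) *\<^sub>R v + t *\<^sub>R f p) = fst v + t *\<^sub>R (fst (f p) - fst v)"
          by (simp add: algebra_simps)
        have e2: "snd ((1 - t) *\<^sub>R v + t *\<^sub>R f p) = snd v + t * (snd (f p) - snd v)"
          by (simp add: algebra_simps)
        show ?thesis unfolding H_def D_def Q_def e1 e2 norm_seg_sq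
          by (simp add: algebra_simps) (simp add: field_simps)
      qed
      finally show "0 \<le> t * D + t\<^sup>2 * Q" by simp
    qed
    moreover have "Q \<ge> 0" unfolding Q_def by simp
    ultimately have D0: "D \<ge> 0" by (rule ineq_lin_quad)
    have "inner (x0 - y - snd p) (y - fst p) = H v + D"
      unfolding H_def D_def y_def f_def
      by (simp add: power2_norm_eq_inner inner_diff_left inner_diff_right inner_add_left inner_add_right
             inner_commute algebra_simps) (simp add: field_simps)
    thus "inner (x0 - y - snd p) (y - fst p) \<ge> 0" using H0 D0 by simp
  qed
qed



lemma K_bounded:
  fixes a b :: "'z::real_inner"
  shows "{y. 0 \<le> inner (a - y) (y - b)} \<subseteq> cball ((1/2) *\<^sub>R (a + b)) (norm (a - b) / 2)"
proof
  fix y assume "y \<in> {y. 0 \<le> inner (a - y) (y - b)}"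
  hence h: "0 \<le> inner (a - y) (y - b)" by simp
  have id: "4 * inner (a - y) (y - b) = inner (a - b) (a - b) - inner (2 *\<^sub>R y - a - b) (2 *\<^sub>R y - a - b)"
  proof -
    have e1: "inner (a - y) (y - b) = inner a y - inner a b - inner y y + inner y b"
      by (simp only: inner_diff_left inner_diff_right inner_commute[of b y]; simp)
    have e2: "inner (a - b) (a - b) = inner a a - 2 * inner a b + inner b b"
      by (simp only: inner_diff_left inner_diff_right inner_commute[of b a]; simp)
    have e3: "inner (2 *\<^sub>R y - a - b) (2 *\<^sub>R y - a - b) = 4 * inner y y - 4 * inner a y - 4 * inner y b
               + inner a a + 2 * inner a b + inner b b"
      by (simp only: inner_diff_left inner_diff_right inner_scaleR_left inner_scaleR_right
           inner_commute[of b a] inner_commute[of y a] inner_commute[of b y]; simp)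
    show ?thesis unfolding e1 e2 e3 by (simp only: right_diff_distrib distrib_left; linarith)
  qed
  have "(norm (2 *\<^sub>R y - a - b))\<^sup>2 \<le> (norm (a - b))\<^sup>2" using h id
    by (simp add: power2_norm_eq_inner)
  hence n: "norm (2 *\<^sub>R y - a - b) \<le> norm (a - b)"
    by (rule power2_le_imp_le) simp
  have "y - (1/2) *\<^sub>R (a + b) = (1/2) *\<^sub>R (2 *\<^sub>R y - a - b)"
    by (simp add: algebra_simps)
  hence "norm (y - (1/2) *\<^sub>R (a + b)) = norm (2 *\<^sub>R y - a - b) / 2" by simp
  thus "y \<in> cball ((1/2) *\<^sub>R (a + b)) (norm (a - b) / 2)"
    using n by (simp add: dist_norm norm_minus_commute)
qed

lemma minty_exists:
  fixes E :: "'z::euclidean_space \<Rightarrow> 'z set"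
  assumes mm: "max_monotone_op E" and a: "\<alpha> > 0"
  shows "\<exists>y. (1/\<alpha>) *\<^sub>R (x0 - y) \<in> E y"
proof -
  have monE: "\<And>x y u v. u \<in> E x \<Longrightarrow> v \<in> E y \<Longrightarrow> inner (u - v) (x - y) \<ge> 0"
    using mm unfolding max_monotone_op_def monotone_op_def by blast
  define P0 where "P0 = {(x, \<alpha> *\<^sub>R u) | x u. u \<in> E x}"
  have mono: "\<And>p q. p\<in>P0 \<Longrightarrow> q\<in>P0 \<Longrightarrow> inner (snd p - snd q) (fst p - fst q) \<ge> 0"
  proof -
    fix p q assume "p \<in> P0" "q \<in> P0"
    then obtain x u y v where p: "p = (x, \<alpha> *\<^sub>R u)" "u \<in> E x" and q: "q = (y, \<alpha> *\<^sub>R v)" "v \<in> E y"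
      unfolding P0_def by blast
    have "inner (snd p - snd q) (fst p - fst q) = \<alpha> * inner (u - v) (x - y)"
      using p q by (simp add: scaleR_diff_right[symmetric])
    also have "\<dots> \<ge> 0" using monE[OF p(2) q(2)] a by simp
    finally show "inner (snd p - snd q) (fst p - fst q) \<ge> 0" .
  qed
  define K where "K = (\<lambda>p::'z\<times>'z. {y. 0 \<le> inner (x0 - y - snd p) (y - fst p)})"
  have Kclosed: "\<And>p. closed (K p)"
    unfolding K_def by (intro closed_Collect_le continuous_intros)
  obtain y where y: "\<forall>p\<in>P0. y \<in> K p"
  proof (cases "P0 = {}")
    case True then show ?thesis using that by auto
  next
    case False then obtain p0 where p0: "p0 \<in> P0" by auto
    have eqv: "\<And>y. x0 - y - snd p0 = (x0 - snd p0) - y" by (simp add: algebra_simps)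
    have "K p0 = {y. 0 \<le> inner ((x0 - snd p0) - y) (y - fst p0)}" unfolding K_def
      by (rule Collect_cong) (simp only: eqv)
    hence "bounded (K p0)"
      using bounded_subset[OF bounded_cball K_bounded] by metis
    hence cpt: "compact (K p0)" using Kclosed by (simp add: compact_eq_bounded_closed)
    have "K p0 \<inter> (\<Inter>p\<in>P0. K p) \<noteq> {}"
    proof (rule compact_imp_fip_image[OF cpt])
      show "\<And>p. p \<in> P0 \<Longrightarrow> closed (K p)" by (rule Kclosed)
      fix I' assume I': "finite I'" "I' \<subseteq> P0"
      have "\<exists>y. \<forall>p\<in>insert p0 I'. inner (x0 - y - snd p) (y - fst p) \<ge> 0"
      proof (rule finite_core)
        show "finite (insert p0 I')" using I' by simp
        show "insert p0 I' \<noteq> {}" by simp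
        fix p q assume "p \<in> insert p0 I'" "q \<in> insert p0 I'"
        hence "p \<in> P0" "q \<in> P0" using I' p0 by auto
        thus "inner (snd p - snd q) (fst p - fst q) \<ge> 0" by (rule mono)
      qed
      then obtain y where "\<forall>p\<in>insert p0 I'. inner (x0 - y - snd p) (y - fst p) \<ge> 0" by blast
      hence "y \<in> K p0 \<inter> (\<Inter>p\<in>I'. K p)" unfolding K_def by auto
      thus "K p0 \<inter> (\<Inter>p\<in>I'. K p) \<noteq> {}" by blast
    qed
    then show ?thesis using that by auto
  qed
  define v where "v = (1/\<alpha>) *\<^sub>R (x0 - y)"
  have rel: "\<And>x u. u \<in> E x \<Longrightarrow> inner (v - u) (y - x) \<ge> 0"
  proof -
    fix x u assume "u \<in> E x"
    hence "(x, \<alpha> *\<^sub>R u) \<in> P0" unfolding P0_def by blast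
    with y have "y \<in> K (x, \<alpha> *\<^sub>R u)" by (rule bspec)
    hence h: "0 \<le> inner (x0 - y - \<alpha> *\<^sub>R u) (y - x)" unfolding K_def by simp
    have "v - u = (1/\<alpha>) *\<^sub>R (x0 - y - \<alpha> *\<^sub>R u)" using a
      by (simp add: v_def scaleR_diff_right)
    hence "inner (v - u) (y - x) = (1/\<alpha>) * inner (x0 - y - \<alpha> *\<^sub>R u) (y - x)" by simp
    thus "inner (v - u) (y - x) \<ge> 0" using h a by simp
  qed
  define B where "B = (\<lambda>z. if z = y then insert v (E z) else E z)"
  have "monotone_op B"
    unfolding monotone_op_def
  proof (intro allI impI)
    fix x1 x2 u1 u2 assume u1: "u1 \<in> B x1" and u2: "u2 \<in> B x2"
    have c1: "(x1 = y \<and> u1 = v) \<or> u1 \<in> E x1"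
    proof (cases "x1 = y")
      case True thus ?thesis using u1 by (simp add: B_def)
    next
      case False thus ?thesis using u1 by (simp add: B_def)
    qed
    have c2: "(x2 = y \<and> u2 = v) \<or> u2 \<in> E x2"
    proof (cases "x2 = y")
      case True thus ?thesis using u2 by (simp add: B_def)
    next
      case False thus ?thesis using u2 by (simp add: B_def)
    qed
    show "0 \<le> inner (u1 - u2) (x1 - x2)"
    proof -
      { assume "x1 = y \<and> u1 = v" "x2 = y \<and> u2 = v" hence ?thesis by simp }
      moreover
      { assume h: "x1 = y \<and> u1 = v" "u2 \<in> E x2" hence ?thesis using rel[OF h(2)] by simp }
      moreover
      { assume h: "u1 \<in> E x1" "x2 = y \<and> u2 = v"
        have "inner (u1 - u2) (x1 - x2) = inner (v - u1) (y - x1)" using h(2)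
          by (simp add: inner_diff_left inner_diff_right)
        hence ?thesis using rel[OF h(1)] by simp }
      moreover
      { assume "u1 \<in> E x1" "u2 \<in> E x2" hence ?thesis by (rule monE) }
      ultimately show ?thesis using c1 c2 by blast
    qed
  qed
  moreover have "\<forall>x. E x \<subseteq> B x" unfolding B_def by auto
  ultimately have BB: "monotone_op B \<and> (\<forall>x. E x \<subseteq> B x)" by (rule conjI)
  have "\<forall>B. monotone_op B \<and> (\<forall>x. E x \<subseteq> B x) \<longrightarrow> B = E"
    using mm unfolding max_monotone_op_def by (elim conjE)
  hence "monotone_op B \<and> (\<forall>x. E x \<subseteq> B x) \<longrightarrow> B = E" by (rule spec)
  hence BE: "B = E" using BB by (rule mp)
  have "v \<in> B y" by (simp add: B_def)
  hence "v \<in> E y" by (simp only: BE)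
  thus ?thesis unfolding v_def by blast
qed

lemma resolvent_in:
  fixes E :: "'z::euclidean_space \<Rightarrow> 'z set"
  assumes mm: "max_monotone_op E" and a: "\<alpha> > 0"
  shows "(1/\<alpha>) *\<^sub>R (x - resolvent \<alpha> E x) \<in> E (resolvent \<alpha> E x)"
proof -
  have monE: "\<And>x y u v. u \<in> E x \<Longrightarrow> v \<in> E y \<Longrightarrow> inner (u - v) (x - y) \<ge> 0"
    using mm unfolding max_monotone_op_def monotone_op_def by blast
  obtain y where y: "(1/\<alpha>) *\<^sub>R (x - y) \<in> E y" using minty_exists[OF mm a] by blast
  have uniq: "\<And>y2. (1/\<alpha>) *\<^sub>R (x - y2) \<in> E y2 \<Longrightarrow> y2 = y"
  proof -
    fix y2 assume y2: "(1/\<alpha>) *\<^sub>R (x - y2) \<in> E y2"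
    have "0 \<le> inner ((1/\<alpha>) *\<^sub>R (x - y2) - (1/\<alpha>) *\<^sub>R (x - y)) (y2 - y)" by (rule monE[OF y2 y])
    also have "\<dots> = - (1/\<alpha>) * inner (y2 - y) (y2 - y)"
      by (simp add: inner_diff_left inner_diff_right algebra_simps)
    finally have "inner (y2 - y) (y2 - y) \<le> 0" using a
      by (simp add: divide_le_0_iff)
    hence "inner (y2 - y) (y2 - y) = 0" using inner_ge_zero[of "y2 - y"] by linarith
    thus "y2 = y" by simp
  qed
  have "\<exists>!y. (1/\<alpha>) *\<^sub>R (x - y) \<in> E y" using y uniq by blast
  hence "(1/\<alpha>) *\<^sub>R (x - (THE y. (1/\<alpha>) *\<^sub>R (x - y) \<in> E y)) \<in> E (THE y. (1/\<alpha>) *\<^sub>R (x - y) \<in> E y)"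
    by (rule theI')
  thus ?thesis unfolding resolvent_def .
qed

lemma resolvent_fne:
  fixes E :: "'z::euclidean_space \<Rightarrow> 'z set"
  assumes mm: "max_monotone_op E" and a: "\<alpha> > 0"
  shows "(norm (resolvent \<alpha> E x - resolvent \<alpha> E y))\<^sup>2
           \<le> inner (resolvent \<alpha> E x - resolvent \<alpha> E y) (x - y)"
proof -
  have monE: "\<And>x y u v. u \<in> E x \<Longrightarrow> v \<in> E y \<Longrightarrow> inner (u - v) (x - y) \<ge> 0"
    using mm unfolding max_monotone_op_def monotone_op_def by blast
  define p where "p = resolvent \<alpha> E x"
  define q where "q = resolvent \<alpha> E y"
  have "0 \<le> inner ((1/\<alpha>) *\<^sub>R (x - p) - (1/\<alpha>) *\<^sub>R (y - q)) (p - q)"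
    unfolding p_def q_def by (intro monE resolvent_in mm a)
  also have "\<dots> = (1/\<alpha>) * (inner (p - q) (x - y) - inner (p - q) (p - q))"
    by (simp add: inner_diff_left inner_diff_right inner_commute algebra_simps)
  finally have "0 \<le> inner (p - q) (x - y) - inner (p - q) (p - q)" using a
    by (simp add: zero_le_divide_iff)
  thus ?thesis unfolding p_def[symmetric] q_def[symmetric] by (simp add: power2_norm_eq_inner)
qed

lemma resolvent_nonexp:
  fixes E :: "'z::euclidean_space \<Rightarrow> 'z set"
  assumes mm: "max_monotone_op E" and a: "\<alpha> > 0"
  shows "norm (resolvent \<alpha> E x - resolvent \<alpha> E y) \<le> norm (x - y)"
proof -
  define d where "d = resolvent \<alpha> E x - resolvent \<alpha> E y"
  have "(norm d)\<^sup>2 \<le> inner d (x - y)" unfolding d_def by (rule resolvent_fne[OF mm a])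
  also have "\<dots> \<le> norm d * norm (x - y)" by (rule norm_cauchy_schwarz)
  finally have "norm d * norm d \<le> norm d * norm (x - y)" by (simp add: power2_eq_square)
  hence "norm d \<le> norm (x - y)" by (cases "norm d = 0") auto
  thus ?thesis unfolding d_def .
qed



lemma coco_lipschitz:
  fixes f :: "'a::real_inner \<Rightarrow> 'a"
  assumes "cocoercive c f" "c > 0"
  shows "c * norm (f x - f y) \<le> norm (x - y)"
proof -
  define d where "d = f x - f y"
  have "c * (norm d)\<^sup>2 \<le> inner d (x - y)" using assms(1) unfolding cocoercive_def d_def by blast
  also have "\<dots> \<le> norm d * norm (x - y)" by (rule norm_cauchy_schwarz)
  finally have "norm d * (c * norm d) \<le> norm d * norm (x - y)" by (simp add: power2_eq_square algebra_simps)
  hence "c * norm d \<le> norm (x - y)" using assms(2) by (cases "norm d = 0") auto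
  thus ?thesis unfolding d_def .
qed

lemma coco_continuous:
  fixes f :: "'a::real_inner \<Rightarrow> 'a"
  assumes "cocoercive c f" "c > 0"
  shows "continuous_on UNIV f"
proof -
  have "(1/c)-lipschitz_on UNIV f"
  proof (rule lipschitz_onI)
    fix x y :: 'a
    have "c * norm (f x - f y) \<le> norm (x - y)" by (rule coco_lipschitz[OF assms])
    hence "norm (f x - f y) \<le> (1/c) * norm (x - y)" using assms(2) by (simp add: field_simps)
    thus "dist (f x) (f y) \<le> 1 / c * dist x y" by (simp add: dist_norm)
  qed (use assms(2) in simp)
  thus ?thesis by (rule lipschitz_on_continuous_on)
qed

lemma norm_sum_sq_le:
  fixes d :: "nat \<Rightarrow> 'a::real_normed_vector"
  shows "(norm (\<Sum>i<N. d i))\<^sup>2 \<le> real N * (\<Sum>i<N. (norm (d i))\<^sup>2)"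
proof -
  have "norm (\<Sum>i<N. d i) \<le> (\<Sum>i<N. norm (d i))" by (rule norm_sum)
  hence "(norm (\<Sum>i<N. d i))\<^sup>2 \<le> (\<Sum>i<N. norm (d i))\<^sup>2" by (simp add: power_mono)
  also have "(\<Sum>i<N. norm (d i)) = (\<Sum>i<N. 1 * norm (d i))" by simp
  also have "(\<Sum>i<N. 1 * norm (d i))\<^sup>2 \<le> (\<Sum>i<N. 1\<^sup>2) * (\<Sum>i<N. (norm (d i))\<^sup>2)"
    by (rule Cauchy_Schwarz_ineq_sum)
  finally show ?thesis by simp
qed

lemma avg_cocoercive:
  fixes Fs :: "nat \<Rightarrow> 'a::real_inner \<Rightarrow> 'a"
  assumes coco: "\<And>i. i < N \<Longrightarrow> cocoercive (1 / L0) (Fs i)" and N: "N \<ge> 1" and L0: "L0 > 0"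
  shows "cocoercive (1 / L0) (\<lambda>x. (1 / real N) *\<^sub>R (\<Sum>i<N. Fs i x))"
  unfolding cocoercive_def
proof (intro allI)
  fix x y :: 'a
  define d where "d = (\<lambda>i. Fs i x - Fs i y)"
  have eq: "(1 / real N) *\<^sub>R (\<Sum>i<N. Fs i x) - (1 / real N) *\<^sub>R (\<Sum>i<N. Fs i y)
            = (1 / real N) *\<^sub>R (\<Sum>i<N. d i)"
    by (simp add: d_def sum_subtractf scaleR_diff_right)
  have ci: "\<And>i. i < N \<Longrightarrow> (1/L0) * (norm (d i))\<^sup>2 \<le> inner (d i) (x - y)"
    using coco unfolding cocoercive_def d_def by blast
  have Npos: "real N > 0" using N by simp
  have "(1/L0) * (norm ((1 / real N) *\<^sub>R (\<Sum>i<N. d i)))\<^sup>2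
        = (1/L0) * (1 / real N)\<^sup>2 * (norm (\<Sum>i<N. d i))\<^sup>2"
    by (simp add: power_mult_distrib power_divide)
  also have "\<dots> \<le> (1/L0) * (1 / real N)\<^sup>2 * (real N * (\<Sum>i<N. (norm (d i))\<^sup>2))"
    using L0 by (intro mult_left_mono norm_sum_sq_le) auto
  also have "\<dots> = (1 / real N) * (\<Sum>i<N. (1/L0) * (norm (d i))\<^sup>2)"
    using Npos by (simp add: sum_distrib_left power2_eq_square field_simps)
  also have "\<dots> \<le> (1 / real N) * (\<Sum>i<N. inner (d i) (x - y))"
    using Npos ci by (intro mult_left_mono sum_mono) auto
  also have "\<dots> = inner ((1 / real N) *\<^sub>R (\<Sum>i<N. d i)) (x - y)"
    by (simp add: inner_sum_left)
  finally show "inner ((1 / real N) *\<^sub>R (\<Sum>i<N. Fs i x) - (1 / real N) *\<^sub>R (\<Sum>i<N. Fs i y)) (x - y)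
       \<ge> (1 / L0) * (norm ((1 / real N) *\<^sub>R (\<Sum>i<N. Fs i x) - (1 / real N) *\<^sub>R (\<Sum>i<N. Fs i y)))\<^sup>2"
    unfolding eq .
qed

lemma G_cocoercive:
  fixes E :: "'z::euclidean_space \<Rightarrow> 'z set" and F :: "'z \<Rightarrow> 'z"
  assumes mm: "max_monotone_op E" and a: "\<alpha> > 0" and L0: "L0 > 0" and aL: "\<alpha> < 4 / L0"
    and Fc: "cocoercive (1 / L0) F"
  defines "G \<equiv> (\<lambda>x. (1/\<alpha>) *\<^sub>R (x - resolvent \<alpha> E (x - \<alpha> *\<^sub>R F x)))"
  shows "(\<alpha> * (4 - \<alpha> * L0) / 4) * (norm (G x - G y))\<^sup>2 \<le> inner (G x - G y) (x - y)"
proof -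
  define p where "p = resolvent \<alpha> E (x - \<alpha> *\<^sub>R F x)"
  define q where "q = resolvent \<alpha> E (y - \<alpha> *\<^sub>R F y)"
  define dx where "dx = x - y"
  define df where "df = F x - F y"
  define dg where "dg = G x - G y"
  have pq: "p - q = dx - \<alpha> *\<^sub>R dg"
    using a by (simp add: G_def p_def[symmetric] q_def[symmetric] dx_def dg_def algebra_simps)
  have arg: "(x - \<alpha> *\<^sub>R F x) - (y - \<alpha> *\<^sub>R F y) = dx - \<alpha> *\<^sub>R df"
    by (simp add: dx_def df_def algebra_simps)
  have fne: "(norm (p - q))\<^sup>2 \<le> inner (p - q) (dx - \<alpha> *\<^sub>R df)"
    using resolvent_fne[OF mm a, of "x - \<alpha> *\<^sub>R F x" "y - \<alpha> *\<^sub>R F y"]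
    unfolding p_def[symmetric] q_def[symmetric] arg .
  define X where "X = inner dg dx"
  define Y where "Y = inner dx df"
  define Z where "Z = inner dg df"
  define g2 where "g2 = inner dg dg"
  define f2 where "f2 = inner df df"
  define x2 where "x2 = inner dx dx"
  have e1: "(norm (p - q))\<^sup>2 = x2 - 2 * \<alpha> * X + \<alpha>\<^sup>2 * g2"
    unfolding pq power2_norm_eq_inner X_def g2_def x2_def
    by (simp add: inner_diff_left inner_diff_right inner_commute[of dx dg] power2_eq_square algebra_simps)
  have e2: "inner (p - q) (dx - \<alpha> *\<^sub>R df) = x2 - \<alpha> * Y - \<alpha> * X + \<alpha>\<^sup>2 * Z"
    unfolding pq X_def Y_def Z_def x2_def
    by (simp add: inner_diff_left inner_diff_right inner_commute[of dx dg] power2_eq_square algebra_simps)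
  have s1: "\<alpha> * X \<ge> \<alpha> * Y - \<alpha>\<^sup>2 * Z + \<alpha>\<^sup>2 * g2" using fne e1 e2 by linarith
  have cc: "(1/L0) * f2 \<le> Y" using Fc unfolding cocoercive_def Y_def f2_def df_def dx_def
    by (metis inner_commute power2_norm_eq_inner)
  have sq: "0 \<le> inner (df - (\<alpha> * L0 / 2) *\<^sub>R dg) (df - (\<alpha> * L0 / 2) *\<^sub>R dg)" by simp
  hence sq2: "0 \<le> f2 - \<alpha> * L0 * Z + (\<alpha> * L0 / 2)\<^sup>2 * g2"
    unfolding f2_def Z_def g2_def
    by (simp add: inner_diff_left inner_diff_right inner_commute[of df dg] power2_eq_square algebra_simps)
  have s3: "(1/L0) * f2 \<ge> \<alpha> * Z - \<alpha>\<^sup>2 * L0 / 4 * g2"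
  proof -
    have "(1/L0) * f2 \<ge> (1/L0) * (\<alpha> * L0 * Z - (\<alpha> * L0 / 2)\<^sup>2 * g2)"
      using sq2 L0 by (intro mult_left_mono) auto
    also have "(1/L0) * (\<alpha> * L0 * Z - (\<alpha> * L0 / 2)\<^sup>2 * g2) = \<alpha> * Z - \<alpha>\<^sup>2 * L0 / 4 * g2"
      using L0 by (simp add: power2_eq_square field_simps)
    finally show ?thesis .
  qed
  have "\<alpha> * Y \<ge> \<alpha> * (\<alpha> * Z - \<alpha>\<^sup>2 * L0 / 4 * g2)"
    using cc s3 a by (intro mult_left_mono) auto
  hence "\<alpha> * X \<ge> \<alpha> * (\<alpha> * g2 - \<alpha>\<^sup>2 * L0 / 4 * g2)"
    using s1 by (simp add: algebra_simps power2_eq_square)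
  hence "X \<ge> \<alpha> * g2 - \<alpha>\<^sup>2 * L0 / 4 * g2" using a by simp
  moreover have "\<alpha> * g2 - \<alpha>\<^sup>2 * L0 / 4 * g2 = (\<alpha> * (4 - \<alpha> * L0) / 4) * g2"
    by (simp add: power2_eq_square algebra_simps)
  ultimately show ?thesis unfolding X_def g2_def dg_def dx_def by (simp add: power2_norm_eq_inner)
qed



lemma pot_step:
  fixes a b d w :: "'a::real_inner" and n :: real
  assumes n: "n > 0"
    and cc: "(norm (a - b))\<^sup>2 \<le> inner (a - b) (- (1/(n+1)) *\<^sub>R w - (n/(n+1)) *\<^sub>R (b + d))"
  shows "n * inner a (w - b - d) + n*(n+1)/2 * (norm a)\<^sup>2
         \<le> n * inner b w + (n-1)*n/2 * (norm b)\<^sup>2 + n*(n+1)/2 * (norm d)\<^sup>2 + n * (norm b * norm d)"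
proof -
  define aw where "aw = inner a w"
  define bw where "bw = inner b w"
  define ab where "ab = inner a b"
  define ad where "ad = inner a d"
  define bd where "bd = inner b d"
  define aa where "aa = inner a a"
  define bb where "bb = inner b b"
  define dd where "dd = inner d d"
  have vv: "- (1/(n+1)) *\<^sub>R w - (n/(n+1)) *\<^sub>R (b + d) = (1/(n+1)) *\<^sub>R (- w - n *\<^sub>R (b + d))"
    by (simp add: algebra_simps)
  have "(norm (a - b))\<^sup>2 \<le> (1/(n+1)) * inner (a - b) (- w - n *\<^sub>R (b + d))"
    using cc unfolding vv by simp
  hence "(n+1) * (norm (a - b))\<^sup>2 \<le> inner (a - b) (- w - n *\<^sub>R (b + d))"
    using n by (simp add: field_simps)
  hence cc2: "(n+1) * (aa - 2*ab + bb) \<le> - (aw - bw) - n * (ab + ad - bb - bd)"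
    unfolding aw_def bw_def ab_def ad_def bd_def aa_def bb_def power2_norm_eq_inner
    by (simp add: inner_diff_left inner_diff_right inner_add_left inner_add_right inner_commute[of b a]
        algebra_simps)
  have S1: "0 \<le> n * (- (aw - bw) - n * (ab + ad - bb - bd) - (n+1) * (aa - 2*ab + bb))"
    using cc2 n by simp
  have Y: "0 \<le> aa + bb + dd - 2*ab + 2*ad - 2*bd"
  proof -
    have "0 \<le> inner (a - b + d) (a - b + d)" by simp
    thus ?thesis unfolding aa_def bb_def dd_def ab_def ad_def bd_def
      by (simp add: inner_diff_left inner_diff_right inner_add_left inner_add_right inner_commute[of b a]
        inner_commute[of d a] inner_commute[of d b] algebra_simps)
  qed
  have S2: "0 \<le> n*(n+1)/2 * (aa + bb + dd - 2*ab + 2*ad - 2*bd)" using Y n by simp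
  have "- bd \<le> norm b * norm d"
    using norm_cauchy_schwarz[of "-b" d] unfolding bd_def by simp
  hence S3: "0 \<le> n * (norm b * norm d + bd)" using n by simp
  have idt: "(n * bw + (n-1)*n/2 * bb + n*(n+1)/2 * dd + n * (norm b * norm d))
             - (n * (aw - ab - ad) + n*(n+1)/2 * aa)
           = n * (- (aw - bw) - n * (ab + ad - bb - bd) - (n+1) * (aa - 2*ab + bb))
             + n*(n+1)/2 * (aa + bb + dd - 2*ab + 2*ad - 2*bd) + n * (norm b * norm d + bd)"
    by (simp add: algebra_simps) (simp add: field_simps)
  have "n * (aw - ab - ad) + n*(n+1)/2 * aa
        \<le> n * bw + (n-1)*n/2 * bb + n*(n+1)/2 * dd + n * (norm b * norm d)"
    using idt S1 S2 S3 by linarith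
  thus ?thesis unfolding aw_def bw_def ab_def ad_def bd_def aa_def bb_def dd_def power2_norm_eq_inner
    by (simp add: inner_diff_right)
qed



lemma young:
  fixes x y c :: real assumes c: "c > 0"
  shows "x * y \<le> c/2 * x\<^sup>2 + y\<^sup>2/(2*c)"
proof -
  have "0 \<le> (c*x - y)\<^sup>2" by simp
  also have "(c*x - y)\<^sup>2 = c*(c*x\<^sup>2) - 2*c*(x*y) + y\<^sup>2" by (simp add: power2_eq_square algebra_simps)
  finally have "2*c*(x*y) \<le> c*(c*x\<^sup>2) + y\<^sup>2" by linarith
  hence "x*y \<le> (c*(c*x\<^sup>2) + y\<^sup>2) / (2*c)" using c by (simp add: field_simps)
  also have "\<dots> = c/2 * x\<^sup>2 + y\<^sup>2/(2*c)" using c by (simp add: field_simps power2_eq_square)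
  finally show ?thesis .
qed

lemma sum_inv_sq: "(\<Sum>i<k. 1/(real i + 1)\<^sup>2) \<le> 2 - 2/(real k + 1)"
proof (induction k)
  case 0 then show ?case by simp
next
  case (Suc k)
  define x where "x = real k"
  have x0: "x \<ge> 0" unfolding x_def by simp
  have nz: "x + 1 \<noteq> 0" "x + 2 \<noteq> 0" using x0 by auto
  have "1/(x + 1)\<^sup>2 + 2/(x + 2) = (x + 2 + 2*(x+1)\<^sup>2) / ((x+1)\<^sup>2 * (x+2))"
    using x0 by (simp add: field_simps)
  also have "\<dots> \<le> (2*(x+1)*(x+2)) / ((x+1)\<^sup>2 * (x+2))"
    using x0 by (intro divide_right_mono) (auto simp: power2_eq_square algebra_simps)
  also have "\<dots> = 2/(x+1)" using nz by (simp add: divide_simps) (simp add: power2_eq_square algebra_simps)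
  finally have key: "1/(real k + 1)\<^sup>2 + 2/(real k + 2) \<le> 2/(real k + 1)" unfolding x_def .
  have "(\<Sum>i<Suc k. 1/(real i + 1)\<^sup>2) = (\<Sum>i<k. 1/(real i + 1)\<^sup>2) + 1/(real k + 1)\<^sup>2" by simp
  also have "\<dots> \<le> 2 - 2/(real k + 1) + 1/(real k + 1)\<^sup>2" using Suc.IH by simp
  also have "\<dots> \<le> 2 - 2/(real k + 2)" using key by simp
  finally show ?case by (simp add: add.commute)
qed

lemma sum_inv_sq2: "(\<Sum>i<k. 1/(real i + 2)\<^sup>2) \<le> 1 - 1/(real k + 1)"
proof (induction k)
  case 0 then show ?case by simp
next
  case (Suc k)
  define x where "x = real k"
  have x0: "x \<ge> 0" unfolding x_def by simp
  have nz: "x + 1 \<noteq> 0" "x + 2 \<noteq> 0" using x0 by auto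
  have "(1 + (x+2)) / ((x+2)\<^sup>2) = 1/(x + 2)\<^sup>2 + (x+2)/(x + 2)\<^sup>2"
    by (rule add_divide_distrib)
  also have "(x+2)/(x + 2)\<^sup>2 = 1/(x+2)" using nz by (simp add: power2_eq_square)
  finally have "1/(x + 2)\<^sup>2 + 1/(x + 2) = (1 + (x+2)) / ((x+2)\<^sup>2)" by simp
  also have "\<dots> \<le> ((x+2)\<^sup>2 / (x+1)) / ((x+2)\<^sup>2)"
  proof (intro divide_right_mono)
    have "(1 + (x+2)) * (x+1) \<le> (x+2)\<^sup>2" using x0 by (simp add: power2_eq_square algebra_simps)
    thus "1 + (x+2) \<le> (x+2)\<^sup>2 / (x+1)" using x0 by (simp add: field_simps)
  qed simp
  also have "\<dots> = 1/(x+1)" using nz by (simp add: divide_simps)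
  finally have key: "1/(real k + 2)\<^sup>2 + 1/(real k + 2) \<le> 1/(real k + 1)" unfolding x_def .
  have "(\<Sum>i<Suc k. 1/(real i + 2)\<^sup>2) = (\<Sum>i<k. 1/(real i + 2)\<^sup>2) + 1/(real k + 2)\<^sup>2" by simp
  also have "\<dots> \<le> 1 - 1/(real k + 1) + 1/(real k + 2)\<^sup>2" using Suc.IH by simp
  also have "\<dots> \<le> 1 - 1/(real k + 2)" using key by simp
  finally show ?case by (simp add: add.commute)
qed

lemma sum_norm_sq_bound:
  fixes r :: "nat \<Rightarrow> real" assumes "\<And>i. r i \<ge> 0"
  shows "(\<Sum>i<k. r i)\<^sup>2 \<le> 2 * (\<Sum>i<k. (real i + 1)\<^sup>2 * (r i)\<^sup>2)"
proof -
  have "(\<Sum>i<k. r i) = (\<Sum>i<k. (1/(real i + 1)) * ((real i + 1) * r i))"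
    by (intro sum.cong) auto
  hence "(\<Sum>i<k. r i)\<^sup>2 \<le> (\<Sum>i<k. (1/(real i + 1))\<^sup>2) * (\<Sum>i<k. ((real i + 1) * r i)\<^sup>2)"
    using Cauchy_Schwarz_ineq_sum by metis
  also have "\<dots> \<le> 2 * (\<Sum>i<k. ((real i + 1) * r i)\<^sup>2)"
  proof (rule mult_right_mono)
    have "(\<Sum>i<k. (1/(real i + 1))\<^sup>2) = (\<Sum>i<k. 1/(real i + 1)\<^sup>2)" by (simp add: power_one_over)
    also have "\<dots> \<le> 2 - 2/(real k + 1)" by (rule sum_inv_sq)
    also have "2 - 2/(real k + 1) \<le> 2" by simp
    finally show "(\<Sum>i<k. (1/(real i + 1))\<^sup>2) \<le> 2" .
  qed (simp add: sum_nonneg)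
  finally show ?thesis by (simp add: power_mult_distrib)
qed



lemma norm3_sq:
  fixes u v w :: "'a::real_normed_vector"
  shows "(norm (u + v + w))\<^sup>2 \<le> 3 * ((norm u)\<^sup>2 + (norm v)\<^sup>2 + (norm w)\<^sup>2)"
proof -
  have "norm (u + v + w) \<le> norm u + norm v + norm w" by (meson norm_triangle_le order_refl add_mono)
  hence "(norm (u + v + w))\<^sup>2 \<le> (norm u + norm v + norm w)\<^sup>2" by (simp add: power_mono)
  also have "\<dots> \<le> 3 * ((norm u)\<^sup>2 + (norm v)\<^sup>2 + (norm w)\<^sup>2)"
  proof -
    have "0 \<le> (norm u - norm v)\<^sup>2 + (norm u - norm w)\<^sup>2 + (norm v - norm w)\<^sup>2" by simp
    thus ?thesis by (simp add: power2_eq_square algebra_simps)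
  qed
  finally show ?thesis .
qed

lemma aux_c1:
  fixes y r :: real assumes y: "y \<ge> 0"
  shows "(y + 1) / (4 * (y + 2)) / 2 * r = ((y+1)*(y+2)*r) * (1 / (y + 2)\<^sup>2) / 8"
proof -
  have nz: "y + 2 \<noteq> 0" using y by linarith
  show ?thesis using nz by (simp add: field_simps; (simp add: algebra_simps power2_eq_square)?)
qed

lemma aux_c2:
  fixes y r :: real assumes y: "y \<ge> 0"
  shows "((y + 1) * r)\<^sup>2 / (2 * ((y + 1) / (4 * (y + 2)))) = 2 * ((y + 1) * (y + 2) * r\<^sup>2)"
proof -
  have nz: "y + 2 \<noteq> 0" "y + 1 \<noteq> 0" using y by linarith+
  show ?thesis using nz by (simp add: field_simps; (simp add: algebra_simps power2_eq_square)?)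
qed

lemma aux_q1:
  fixes y :: real assumes y: "y \<ge> 0"
  shows "(y+1)*(y+2)*(1/(y+2))\<^sup>2 \<le> 1"
proof -
  have p: "y + 2 > 0" using y by linarith
  have "(y+1)*(y+2)*(1/(y+2))\<^sup>2 = (y+1)/(y+2)" using p by (simp add: power2_eq_square)
  also have "\<dots> \<le> 1" using p by simp
  finally show ?thesis .
qed

lemma aux_q2:
  fixes y :: real assumes y: "y \<ge> 0"
  shows "(y+1)*(y+2)*((y+1)/(y+2))\<^sup>2 \<le> (y+1)\<^sup>2"
proof -
  have "(y+1)*(y+2)*((y+1)/(y+2))\<^sup>2 = (y+1)\<^sup>2 * ((y+1)*(y+2)*(1/(y+2))\<^sup>2)"
    by (simp add: power2_eq_square)
  also have "\<dots> \<le> (y+1)\<^sup>2 * 1" by (intro mult_left_mono aux_q1 y) simp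
  finally show ?thesis by simp
qed

lemma norm_diff_sq:
  fixes a b :: "'a::real_inner"
  shows "(norm (a - b))\<^sup>2 = (norm a)\<^sup>2 - 2 * inner b a + (norm b)\<^sup>2"
  by (simp add: power2_norm_eq_inner inner_diff_left inner_diff_right inner_commute[of b a])

lemma halpern_det:
  fixes g :: "'z::real_inner \<Rightarrow> 'z" and z \<delta> :: "nat \<Rightarrow> 'z" and z0 zs :: 'z
  assumes coco: "\<And>x y. (norm (g x - g y))\<^sup>2 \<le> inner (g x - g y) (x - y)"
    and root: "g zs = 0"
    and z0: "z 0 = z0"
    and step: "\<And>k. z (Suc k) = (1 / real (k+2)) *\<^sub>R z0 + (1 - 1/real (k+2)) *\<^sub>R (z k - g (z k) - \<delta> k)"
  shows "(real k + 1) * (real k + 2) * (norm (g (z k)))\<^sup>2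
           \<le> 8 * (norm (z0 - zs))\<^sup>2 + 40 * (\<Sum>i<k. (real i + 1)\<^sup>2 * (norm (\<delta> i))\<^sup>2)"
    and "(real k + 1) * (real k + 2) * (norm (z (Suc k) - z k))\<^sup>2
           \<le> 48 * (norm (z0 - zs))\<^sup>2 + 132 * (\<Sum>i<Suc k. (real i + 1)\<^sup>2 * (norm (\<delta> i))\<^sup>2)"
proof -
  define D where "D = norm (z0 - zs)"
  define X where "X = (\<lambda>k. \<Sum>i<k. (real i + 1)\<^sup>2 * (norm (\<delta> i))\<^sup>2)"
  define gk where "gk = (\<lambda>k. g (z k))"
  define V where "V = (\<lambda>k. (real k + 1) * inner (gk k) (z k - z0) + real k * (real k + 1) / 2 * (norm (gk k))\<^sup>2)"
  have Xmono: "\<And>i k. i \<le> k \<Longrightarrow> X i \<le> X k" unfolding X_def by (intro sum_mono2) auto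
  have Xnn: "\<And>k. X k \<ge> 0" unfolding X_def by (intro sum_nonneg) auto
  have Dnn: "D \<ge> 0" unfolding D_def by simp
  have bet: "\<And>k. 1 - 1/(real k + 2) = (real k + 1)/(real k + 2)" by (simp add: field_simps)
  have r2: "\<And>k. real (k+2) = real k + 2" by simp
  have diff: "\<And>k. z (Suc k) - z k = - (1/(real k + 2)) *\<^sub>R (z k - z0) - ((real k + 1)/(real k + 2)) *\<^sub>R (gk k + \<delta> k)"
  proof -
    fix k
    have "z (Suc k) - z k = (1 / real (k+2)) *\<^sub>R z0 + (1 - 1/real (k+2)) *\<^sub>R (z k - gk k - \<delta> k) - z k"
      using step unfolding gk_def by simp
    also have "\<dots> = - (1/real (k+2)) *\<^sub>R (z k - z0) - (1 - 1/real (k+2)) *\<^sub>R (gk k + \<delta> k)"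
      by (simp add: algebra_simps)
    finally show "z (Suc k) - z k = - (1/(real k + 2)) *\<^sub>R (z k - z0) - ((real k + 1)/(real k + 2)) *\<^sub>R (gk k + \<delta> k)"
      unfolding r2 bet .
  qed
  have zs0: "\<And>k. z (Suc k) - z0 = ((real k + 1)/(real k + 2)) *\<^sub>R (z k - z0 - gk k - \<delta> k)"
  proof -
    fix k
    have "z (Suc k) - z0 = (1 / real (k+2)) *\<^sub>R z0 + (1 - 1/real (k+2)) *\<^sub>R (z k - gk k - \<delta> k) - z0"
      using step unfolding gk_def by simp
    also have "\<dots> = (1 - 1/real (k+2)) *\<^sub>R (z k - z0 - gk k - \<delta> k)"
      by (simp add: algebra_simps)
    finally show "z (Suc k) - z0 = ((real k + 1)/(real k + 2)) *\<^sub>R (z k - z0 - gk k - \<delta> k)"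
      unfolding r2 bet .
  qed
  have Vstep: "\<And>k. V (Suc k) \<le> V k + (real k + 1) * (real k + 2) / 2 * (norm (\<delta> k))\<^sup>2
                                  + (real k + 1) * (norm (gk k) * norm (\<delta> k))"
  proof -
    fix k
    define n where "n = real k + 1"
    have n0: "n > 0" unfolding n_def by simp
    have n1: "real k + 2 = n + 1" unfolding n_def by simp
    have cc: "(norm (gk (Suc k) - gk k))\<^sup>2
              \<le> inner (gk (Suc k) - gk k) (- (1/(n+1)) *\<^sub>R (z k - z0) - (n/(n+1)) *\<^sub>R (gk k + \<delta> k))"
      using coco[of "z (Suc k)" "z k"] diff[of k] unfolding gk_def n1 n_def[symmetric] by simp
    have P: "n * inner (gk (Suc k)) ((z k - z0) - gk k - \<delta> k) + n*(n+1)/2 * (norm (gk (Suc k)))\<^sup>2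
         \<le> n * inner (gk k) (z k - z0) + (n-1)*n/2 * (norm (gk k))\<^sup>2 + n*(n+1)/2 * (norm (\<delta> k))\<^sup>2
            + n * (norm (gk k) * norm (\<delta> k))"
      by (rule pot_step[OF n0 cc])
    have V1: "V (Suc k) = n * inner (gk (Suc k)) ((z k - z0) - gk k - \<delta> k) + n*(n+1)/2 * (norm (gk (Suc k)))\<^sup>2"
      unfolding V_def zs0 inner_scaleR_right n_def by (simp add: field_simps)
    have V0: "V k = n * inner (gk k) (z k - z0) + (n-1)*n/2 * (norm (gk k))\<^sup>2"
      unfolding V_def n_def by simp
    show "V (Suc k) \<le> V k + (real k + 1) * (real k + 2) / 2 * (norm (\<delta> k))\<^sup>2
                                  + (real k + 1) * (norm (gk k) * norm (\<delta> k))"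
      using P unfolding V1 V0 n1 n_def[symmetric] by simp
  qed
  have Vsum: "\<And>k. V k \<le> (\<Sum>i<k. (real i + 1) * (real i + 2) / 2 * (norm (\<delta> i))\<^sup>2
                                + (real i + 1) * (norm (gk i) * norm (\<delta> i)))"
  proof -
    fix k show "V k \<le> (\<Sum>i<k. (real i + 1) * (real i + 2) / 2 * (norm (\<delta> i))\<^sup>2
                                + (real i + 1) * (norm (gk i) * norm (\<delta> i)))"
    proof (induction k)
      case 0 show ?case by (simp add: V_def z0)
    next
      case (Suc k) thus ?case using Vstep[of k] by simp
    qed
  qed
  have Vlow: "\<And>k. (real k + 1) * (real k + 2) / 2 * (norm (gk k))\<^sup>2 - (real k + 1) * (D * norm (gk k)) \<le> V k"
  proof -
    fix k
    have c1: "(norm (gk k))\<^sup>2 \<le> inner (gk k) (z k - zs)"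
      using coco[of "z k" zs] unfolding root gk_def by simp
    have c2: "- (D * norm (gk k)) \<le> inner (gk k) (zs - z0)"
    proof -
      have "- inner (gk k) (zs - z0) \<le> norm (gk k) * norm (zs - z0)"
        using norm_cauchy_schwarz[of "gk k" "z0 - zs"] by (simp add: inner_diff_right norm_minus_commute)
      thus ?thesis unfolding D_def by (simp add: norm_minus_commute mult.commute)
    qed
    have "inner (gk k) (z k - z0) = inner (gk k) (z k - zs) + inner (gk k) (zs - z0)"
      by (simp add: inner_diff_right)
    hence "(norm (gk k))\<^sup>2 - D * norm (gk k) \<le> inner (gk k) (z k - z0)" using c1 c2 by linarith
    hence "(real k + 1) * ((norm (gk k))\<^sup>2 - D * norm (gk k)) \<le> (real k + 1) * inner (gk k) (z k - z0)"
      by (intro mult_left_mono) auto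
    thus "(real k + 1) * (real k + 2) / 2 * (norm (gk k))\<^sup>2 - (real k + 1) * (D * norm (gk k)) \<le> V k"
      unfolding V_def by (simp add: algebra_simps add_divide_distrib)
  qed
  have B1: "\<And>k. (real k + 1) * (real k + 2) * (norm (gk k))\<^sup>2 \<le> 8 * D\<^sup>2 + 40 * X k"
  proof -
    fix k show "(real k + 1) * (real k + 2) * (norm (gk k))\<^sup>2 \<le> 8 * D\<^sup>2 + 40 * X k"
    proof (induction k rule: less_induct)
      case (less k)
      define B where "B = 8 * D\<^sup>2 + 40 * X k"
      have Bnn: "B \<ge> 0" unfolding B_def using Xnn[of k] by simp
      have cross: "\<And>i. i < k \<Longrightarrow> (real i + 1) * (norm (gk i) * norm (\<delta> i))
                     \<le> B * (1 / (real i + 2)\<^sup>2) / 8 + 2 * ((real i + 1) * (real i + 2) * (norm (\<delta> i))\<^sup>2)"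
      proof -
        fix i assume i: "i < k"
        define c where "c = (real i + 1) / (4 * (real i + 2))"
        have c0: "c > 0" unfolding c_def by simp
        have "(real i + 1) * (norm (gk i) * norm (\<delta> i)) = norm (gk i) * ((real i + 1) * norm (\<delta> i))" by simp
        also have "\<dots> \<le> c/2 * (norm (gk i))\<^sup>2 + ((real i + 1) * norm (\<delta> i))\<^sup>2 / (2*c)" by (rule young[OF c0])
        also have "c/2 * (norm (gk i))\<^sup>2 = ((real i+1)*(real i+2)*(norm (gk i))\<^sup>2) * (1 / (real i + 2)\<^sup>2) / 8"
          unfolding c_def by (rule aux_c1) simp
        also have "((real i + 1) * norm (\<delta> i))\<^sup>2 / (2*c) = 2 * ((real i + 1) * (real i + 2) * (norm (\<delta> i))\<^sup>2)"
          unfolding c_def by (rule aux_c2) simp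
        also have "((real i+1)*(real i+2)*(norm (gk i))\<^sup>2) * (1 / (real i + 2)\<^sup>2) / 8 \<le> B * (1 / (real i + 2)\<^sup>2) / 8"
        proof -
          have "(real i+1)*(real i+2)*(norm (gk i))\<^sup>2 \<le> B"
            using less.IH[OF i] Xmono[of i k] i unfolding B_def by simp
          thus ?thesis by (intro divide_right_mono mult_right_mono) auto
        qed
        finally show "(real i + 1) * (norm (gk i) * norm (\<delta> i))
                     \<le> B * (1 / (real i + 2)\<^sup>2) / 8 + 2 * ((real i + 1) * (real i + 2) * (norm (\<delta> i))\<^sup>2)"
          by simp
      qed
      have sumb: "(\<Sum>i<k. (real i + 1) * (real i + 2) / 2 * (norm (\<delta> i))\<^sup>2
                                + (real i + 1) * (norm (gk i) * norm (\<delta> i))) \<le> 5 * X k + B / 8"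
      proof -
        have "(\<Sum>i<k. (real i + 1) * (real i + 2) / 2 * (norm (\<delta> i))\<^sup>2
                                + (real i + 1) * (norm (gk i) * norm (\<delta> i)))
              \<le> (\<Sum>i<k. 5 * ((real i + 1)\<^sup>2 * (norm (\<delta> i))\<^sup>2) + B/8 * (1/(real i + 2)\<^sup>2))"
        proof (rule sum_mono)
          fix i assume "i \<in> {..<k}"
          hence i: "i < k" by simp
          have "(real i + 1) * (real i + 2) * (norm (\<delta> i))\<^sup>2 \<le> 2 * ((real i + 1)\<^sup>2 * (norm (\<delta> i))\<^sup>2)"
          proof -
            have "(real i + 1) * (real i + 2) \<le> 2 * (real i + 1)\<^sup>2" by (simp add: power2_eq_square algebra_simps)
            hence "(real i + 1) * (real i + 2) * (norm (\<delta> i))\<^sup>2 \<le> 2 * (real i + 1)\<^sup>2 * (norm (\<delta> i))\<^sup>2"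
              by (intro mult_right_mono) auto
            thus ?thesis by simp
          qed
          thus "(real i + 1) * (real i + 2) / 2 * (norm (\<delta> i))\<^sup>2 + (real i + 1) * (norm (gk i) * norm (\<delta> i))
              \<le> 5 * ((real i + 1)\<^sup>2 * (norm (\<delta> i))\<^sup>2) + B/8 * (1/(real i + 2)\<^sup>2)"
            using cross[OF i] by simp
        qed
        also have "\<dots> = 5 * X k + B/8 * (\<Sum>i<k. 1/(real i + 2)\<^sup>2)"
          unfolding X_def by (simp add: sum.distrib sum_distrib_left)
        also have "\<dots> \<le> 5 * X k + B/8 * 1"
        proof -
          have "1 - 1/(real k + 1) \<le> 1" by simp
          hence "(\<Sum>i<k. 1/(real i + 2)\<^sup>2) \<le> 1" using sum_inv_sq2[of k] by linarith
          thus ?thesis using Bnn by (intro add_left_mono mult_left_mono) auto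
        qed
        finally show ?thesis by simp
      qed
      have yk: "(real k + 1) * (D * norm (gk k)) \<le> (real k + 1) * (real k + 2) * (norm (gk k))\<^sup>2 / 4 + D\<^sup>2"
      proof -
        have "(real k + 1) * (D * norm (gk k)) = ((real k + 1) * norm (gk k)) * D" by simp
        also have "\<dots> \<le> (1/2)/2 * ((real k + 1) * norm (gk k))\<^sup>2 + D\<^sup>2 / (2 * (1/2))"
          by (rule young) simp
        also have "\<dots> = (real k + 1) * (real k + 1) * (norm (gk k))\<^sup>2 / 4 + D\<^sup>2"
          by (simp add: power2_eq_square)
        also have "\<dots> \<le> (real k + 1) * (real k + 2) * (norm (gk k))\<^sup>2 / 4 + D\<^sup>2"
          by (intro add_right_mono divide_right_mono mult_right_mono) auto
        finally show ?thesis .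
      qed
      define Q where "Q = (real k + 1) * (real k + 2) * (norm (gk k))\<^sup>2"
      have "(real k + 1) * (real k + 2) / 2 * (norm (gk k))\<^sup>2 - (real k + 1) * (D * norm (gk k)) \<le> 5 * X k + B / 8"
        using Vlow[of k] Vsum[of k] sumb by linarith
      moreover have "(real k + 1) * (real k + 2) / 2 * (norm (gk k))\<^sup>2 = Q / 2" unfolding Q_def by simp
      moreover have "(real k + 1) * (D * norm (gk k)) \<le> Q / 4 + D\<^sup>2" using yk unfolding Q_def by simp
      moreover have "B / 8 = D\<^sup>2 + 5 * X k" unfolding B_def by simp
      ultimately have "Q \<le> 8 * D\<^sup>2 + 40 * X k" by linarith
      thus ?case unfolding Q_def .
    qed
  qed
  show "(real k + 1) * (real k + 2) * (norm (g (z k)))\<^sup>2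
           \<le> 8 * (norm (z0 - zs))\<^sup>2 + 40 * (\<Sum>i<k. (real i + 1)\<^sup>2 * (norm (\<delta> i))\<^sup>2)"
    using B1[of k] unfolding gk_def D_def X_def .
  have nexp: "\<And>x y. norm ((x - g x) - (y - g y)) \<le> norm (x - y)"
  proof -
    fix x y
    have e: "(x - g x) - (y - g y) = (x - y) - (g x - g y)" by (simp add: algebra_simps)
    have "(norm ((x - g x) - (y - g y)))\<^sup>2 = (norm (x - y))\<^sup>2 - 2 * inner (g x - g y) (x - y) + (norm (g x - g y))\<^sup>2"
      unfolding e by (rule norm_diff_sq)
    also have "\<dots> \<le> (norm (x - y))\<^sup>2" using coco[of x y] zero_le_power2[of "norm (g x - g y)"] by linarith
    finally show "norm ((x - g x) - (y - g y)) \<le> norm (x - y)" by (rule power2_le_imp_le) simp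
  qed
  have wb: "\<And>k. norm (z k - zs) \<le> D + (\<Sum>i<k. norm (\<delta> i))"
  proof -
    fix k show "norm (z k - zs) \<le> D + (\<Sum>i<k. norm (\<delta> i))"
    proof (induction k)
      case 0 show ?case using z0 unfolding D_def by simp
    next
      case (Suc k)
      define b where "b = 1 / real (k+2)"
      have b0: "0 \<le> b" "b \<le> 1" unfolding b_def by auto
      have "z (Suc k) - zs = b *\<^sub>R (z0 - zs) + (1 - b) *\<^sub>R ((z k - g (z k)) - (zs - g zs)) - (1 - b) *\<^sub>R \<delta> k"
        unfolding step b_def[symmetric] root by (simp add: algebra_simps)
      hence "norm (z (Suc k) - zs) \<le> norm (b *\<^sub>R (z0 - zs)) + norm ((1 - b) *\<^sub>R ((z k - g (z k)) - (zs - g zs))) + norm ((1 - b) *\<^sub>R \<delta> k)"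
        by (metis norm_triangle_ineq4 norm_triangle_ineq order_trans add_right_mono)
      also have "\<dots> = b * D + (1 - b) * norm ((z k - g (z k)) - (zs - g zs)) + (1 - b) * norm (\<delta> k)"
        using b0 unfolding D_def by simp
      also have "\<dots> \<le> b * D + (1 - b) * (D + (\<Sum>i<k. norm (\<delta> i))) + (1 - b) * norm (\<delta> k)"
      proof -
        have "norm ((z k - g (z k)) - (zs - g zs)) \<le> D + (\<Sum>i<k. norm (\<delta> i))"
          using nexp[of "z k" zs] Suc.IH by linarith
        thus ?thesis using b0 by (intro add_mono mult_left_mono) auto
      qed
      also have "\<dots> = D + (1 - b) * ((\<Sum>i<k. norm (\<delta> i)) + norm (\<delta> k))" by (simp add: algebra_simps)
      also have "\<dots> \<le> D + ((\<Sum>i<k. norm (\<delta> i)) + norm (\<delta> k))"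
      proof -
        have "0 \<le> (\<Sum>i<k. norm (\<delta> i)) + norm (\<delta> k)" by (simp add: sum_nonneg)
        hence "(1 - b) * ((\<Sum>i<k. norm (\<delta> i)) + norm (\<delta> k)) \<le> 1 * ((\<Sum>i<k. norm (\<delta> i)) + norm (\<delta> k))"
          using b0 by (intro mult_right_mono) auto
        thus ?thesis by simp
      qed
      finally show ?case by simp
    qed
  qed
  show "(real k + 1) * (real k + 2) * (norm (z (Suc k) - z k))\<^sup>2
           \<le> 48 * (norm (z0 - zs))\<^sup>2 + 132 * (\<Sum>i<Suc k. (real i + 1)\<^sup>2 * (norm (\<delta> i))\<^sup>2)"
  proof -
    define y where "y = real k"
    have y0: "y \<ge> 0" unfolding y_def by simp
    define q where "q = (y + 1) * (y + 2)"
    have q0: "q \<ge> 0" unfolding q_def using y0 by simp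
    define S where "S = (\<Sum>i<k. norm (\<delta> i))"
    have S2: "S\<^sup>2 \<le> 2 * X k" unfolding S_def X_def by (rule sum_norm_sq_bound) simp
    have Snn: "S \<ge> 0" unfolding S_def by (simp add: sum_nonneg)
    have zz: "norm (z k - z0) \<le> 2 * D + S"
    proof -
      have "z k - z0 = (z k - zs) + (zs - z0)" by simp
      hence "norm (z k - z0) \<le> norm (z k - zs) + norm (zs - z0)" by (metis norm_triangle_ineq)
      thus ?thesis using wb[of k] unfolding S_def D_def by (simp add: norm_minus_commute)
    qed
    have zz2: "(norm (z k - z0))\<^sup>2 \<le> 8 * D\<^sup>2 + 4 * X k"
    proof -
      have "(norm (z k - z0))\<^sup>2 \<le> (2 * D + S)\<^sup>2" using zz by (simp add: power_mono)
      also have "\<dots> \<le> 8 * D\<^sup>2 + 2 * S\<^sup>2"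
      proof -
        have "0 \<le> (2 * D - S)\<^sup>2" by simp
        thus ?thesis by (simp add: power2_eq_square algebra_simps)
      qed
      finally show ?thesis using S2 by linarith
    qed
    define u where "u = - (1/(y + 2)) *\<^sub>R (z k - z0)"
    define v where "v = - ((y + 1)/(y + 2)) *\<^sub>R gk k"
    define w where "w = - ((y + 1)/(y + 2)) *\<^sub>R \<delta> k"
    have dz: "z (Suc k) - z k = u + v + w"
      using diff[of k] unfolding u_def v_def w_def y_def by (simp add: algebra_simps)
    have sqn: "\<And>c x. (norm (c *\<^sub>R x))\<^sup>2 = c\<^sup>2 * (norm (x::'z))\<^sup>2"
      by (simp add: power_mult_distrib)
    have hu: "q * (norm u)\<^sup>2 \<le> 8 * D\<^sup>2 + 4 * X k"
    proof -
      have "q * (norm u)\<^sup>2 = (q * (1/(y+2))\<^sup>2) * (norm (z k - z0))\<^sup>2"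
        unfolding u_def sqn by (simp add: power2_eq_square)
      also have "\<dots> \<le> 1 * (norm (z k - z0))\<^sup>2"
        unfolding q_def by (intro mult_right_mono aux_q1 y0) simp
      finally show ?thesis using zz2 by simp
    qed
    have hv: "q * (norm v)\<^sup>2 \<le> 8 * D\<^sup>2 + 40 * X k"
    proof -
      have "q * (norm v)\<^sup>2 = (q * ((y+1)/(y+2))\<^sup>2) * (norm (gk k))\<^sup>2"
        unfolding v_def sqn by (simp add: power2_eq_square)
      also have "\<dots> \<le> (y+1)\<^sup>2 * (norm (gk k))\<^sup>2"
        unfolding q_def by (intro mult_right_mono aux_q2 y0) simp
      also have "\<dots> \<le> q * (norm (gk k))\<^sup>2"
        unfolding q_def using y0 by (intro mult_right_mono) (auto simp: power2_eq_square)
      also have "\<dots> \<le> 8 * D\<^sup>2 + 40 * X k" using B1[of k] unfolding q_def y_def by simp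
      finally show ?thesis .
    qed
    have hw: "q * (norm w)\<^sup>2 \<le> (real k + 1)\<^sup>2 * (norm (\<delta> k))\<^sup>2"
    proof -
      have "q * (norm w)\<^sup>2 = (q * ((y+1)/(y+2))\<^sup>2) * (norm (\<delta> k))\<^sup>2"
        unfolding w_def sqn by (simp add: power2_eq_square)
      also have "\<dots> \<le> (y+1)\<^sup>2 * (norm (\<delta> k))\<^sup>2"
        unfolding q_def by (intro mult_right_mono aux_q2 y0) simp
      finally show ?thesis unfolding y_def .
    qed
    have "q * (norm (z (Suc k) - z k))\<^sup>2 \<le> q * (3 * ((norm u)\<^sup>2 + (norm v)\<^sup>2 + (norm w)\<^sup>2))"
      unfolding dz using q0 by (intro mult_left_mono norm3_sq) auto
    also have "\<dots> = 3 * (q * (norm u)\<^sup>2 + q * (norm v)\<^sup>2 + q * (norm w)\<^sup>2)" by (simp add: algebra_simps)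
    also have "\<dots> \<le> 3 * ((8 * D\<^sup>2 + 4 * X k) + (8 * D\<^sup>2 + 40 * X k) + (real k + 1)\<^sup>2 * (norm (\<delta> k))\<^sup>2)"
      using hu hv hw by simp
    also have "\<dots> \<le> 48 * D\<^sup>2 + 132 * (X k + (real k + 1)\<^sup>2 * (norm (\<delta> k))\<^sup>2)"
      using Xnn[of k] zero_le_power2[of "(real k + 1) * norm (\<delta> k)"] by (simp add: power_mult_distrib)
    finally show ?thesis unfolding q_def y_def D_def X_def by simp
  qed
qed



lemma integral_bound_sum:
  fixes h :: "nat \<Rightarrow> 'w \<Rightarrow> real" and M :: "'w measure"
  assumes P: "prob_space M" and fin: "finite I"
    and hm: "\<And>i. i \<in> I \<Longrightarrow> (\<lambda>\<omega>. h i \<omega>) \<in> borel_measurable M"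
    and hnn: "\<And>i \<omega>. 0 \<le> h i \<omega>"
    and hs: "\<And>i. i \<in> I \<Longrightarrow> (\<integral>\<^sup>+\<omega>. ennreal (h i \<omega>) \<partial>M) \<le> ennreal (s i)"
    and snn: "\<And>i. 0 \<le> s i" and ann: "\<And>i. 0 \<le> a i" and bnn: "\<And>i. 0 \<le> b i"
    and c: "0 \<le> c" and d: "0 \<le> d"
  shows "(\<integral>\<^sup>+\<omega>. ennreal (c + d * (\<Sum>i\<in>I. a i * h i \<omega> + b i)) \<partial>M)
           \<le> ennreal (c + d * (\<Sum>i\<in>I. a i * s i + b i))"
proof -
  have sp: "emeasure M (space M) = 1" using P by (rule prob_space.emeasure_space_1)
  have hme: "\<And>i. i \<in> I \<Longrightarrow> (\<lambda>\<omega>. ennreal (h i \<omega>)) \<in> borel_measurable M"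
    using hm by measurable
  have trm: "\<And>i x. 0 \<le> x \<Longrightarrow> ennreal (a i * x + b i) = ennreal (a i) * ennreal x + ennreal (b i)"
    using ann bnn by (simp add: ennreal_mult)
  have eq: "\<And>\<omega>. ennreal (c + d * (\<Sum>i\<in>I. a i * h i \<omega> + b i))
          = ennreal c + ennreal d * (\<Sum>i\<in>I. ennreal (a i) * ennreal (h i \<omega>) + ennreal (b i))"
  proof -
    fix \<omega>
    have nn: "\<And>i. 0 \<le> a i * h i \<omega> + b i" using ann bnn hnn by simp
    have "ennreal (c + d * (\<Sum>i\<in>I. a i * h i \<omega> + b i)) = ennreal c + ennreal d * ennreal (\<Sum>i\<in>I. a i * h i \<omega> + b i)"
      using c d nn by (simp add: ennreal_mult sum_nonneg)
    also have "ennreal (\<Sum>i\<in>I. a i * h i \<omega> + b i) = (\<Sum>i\<in>I. ennreal (a i * h i \<omega> + b i))"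
      using nn by (rule sum_ennreal[symmetric])
    also have "\<dots> = (\<Sum>i\<in>I. ennreal (a i) * ennreal (h i \<omega>) + ennreal (b i))"
      using trm hnn by simp
    finally show "ennreal (c + d * (\<Sum>i\<in>I. a i * h i \<omega> + b i))
          = ennreal c + ennreal d * (\<Sum>i\<in>I. ennreal (a i) * ennreal (h i \<omega>) + ennreal (b i))" .
  qed
  have "(\<integral>\<^sup>+\<omega>. ennreal (c + d * (\<Sum>i\<in>I. a i * h i \<omega> + b i)) \<partial>M)
      = (\<integral>\<^sup>+\<omega>. ennreal c + ennreal d * (\<Sum>i\<in>I. ennreal (a i) * ennreal (h i \<omega>) + ennreal (b i)) \<partial>M)"
    unfolding eq ..
  also have "\<dots> = ennreal c + ennreal d * (\<Sum>i\<in>I. ennreal (a i) * (\<integral>\<^sup>+\<omega>. ennreal (h i \<omega>) \<partial>M) + ennreal (b i))"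
  proof -
    have m1: "\<And>i. i \<in> I \<Longrightarrow> (\<lambda>\<omega>. ennreal (a i) * ennreal (h i \<omega>) + ennreal (b i)) \<in> borel_measurable M"
      using hme by measurable
    have ms: "(\<lambda>\<omega>. (\<Sum>i\<in>I. ennreal (a i) * ennreal (h i \<omega>) + ennreal (b i))) \<in> borel_measurable M"
      by (rule borel_measurable_sum) (rule m1)
    have m2: "(\<lambda>\<omega>. ennreal d * (\<Sum>i\<in>I. ennreal (a i) * ennreal (h i \<omega>) + ennreal (b i))) \<in> borel_measurable M"
      using ms by measurable
    have "(\<integral>\<^sup>+\<omega>. ennreal c + ennreal d * (\<Sum>i\<in>I. ennreal (a i) * ennreal (h i \<omega>) + ennreal (b i)) \<partial>M)
        = (\<integral>\<^sup>+\<omega>. ennreal c \<partial>M) + (\<integral>\<^sup>+\<omega>. ennreal d * (\<Sum>i\<in>I. ennreal (a i) * ennreal (h i \<omega>) + ennreal (b i)) \<partial>M)"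
      using m2 by (intro nn_integral_add) auto
    also have "(\<integral>\<^sup>+\<omega>. ennreal c \<partial>M) = ennreal c" using sp by simp
    also have "(\<integral>\<^sup>+\<omega>. ennreal d * (\<Sum>i\<in>I. ennreal (a i) * ennreal (h i \<omega>) + ennreal (b i)) \<partial>M)
        = ennreal d * (\<integral>\<^sup>+\<omega>. (\<Sum>i\<in>I. ennreal (a i) * ennreal (h i \<omega>) + ennreal (b i)) \<partial>M)"
      using ms by (rule nn_integral_cmult)
    also have "(\<integral>\<^sup>+\<omega>. (\<Sum>i\<in>I. ennreal (a i) * ennreal (h i \<omega>) + ennreal (b i)) \<partial>M)
        = (\<Sum>i\<in>I. (\<integral>\<^sup>+\<omega>. ennreal (a i) * ennreal (h i \<omega>) + ennreal (b i) \<partial>M))"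
      using m1 by (rule nn_integral_sum)
    also have "\<dots> = (\<Sum>i\<in>I. ennreal (a i) * (\<integral>\<^sup>+\<omega>. ennreal (h i \<omega>) \<partial>M) + ennreal (b i))"
    proof (rule sum.cong[OF refl])
      fix i assume i: "i \<in> I"
      have "(\<integral>\<^sup>+\<omega>. ennreal (a i) * ennreal (h i \<omega>) + ennreal (b i) \<partial>M)
          = (\<integral>\<^sup>+\<omega>. ennreal (a i) * ennreal (h i \<omega>) \<partial>M) + (\<integral>\<^sup>+\<omega>. ennreal (b i) \<partial>M)"
        using hme[OF i] by (intro nn_integral_add borel_measurable_times_ennreal borel_measurable_const)
      also have "(\<integral>\<^sup>+\<omega>. ennreal (a i) * ennreal (h i \<omega>) \<partial>M) = ennreal (a i) * (\<integral>\<^sup>+\<omega>. ennreal (h i \<omega>) \<partial>M)"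
        using hme[OF i] by (rule nn_integral_cmult)
      also have "(\<integral>\<^sup>+\<omega>. ennreal (b i) \<partial>M) = ennreal (b i)" using sp by simp
      finally show "(\<integral>\<^sup>+\<omega>. ennreal (a i) * ennreal (h i \<omega>) + ennreal (b i) \<partial>M)
          = ennreal (a i) * (\<integral>\<^sup>+\<omega>. ennreal (h i \<omega>) \<partial>M) + ennreal (b i)" .
    qed
    finally show ?thesis .
  qed
  also have "\<dots> \<le> ennreal c + ennreal d * (\<Sum>i\<in>I. ennreal (a i) * ennreal (s i) + ennreal (b i))"
    using hs by (intro add_left_mono mult_left_mono sum_mono add_right_mono) auto
  also have "\<dots> = ennreal (c + d * (\<Sum>i\<in>I. a i * s i + b i))"
  proof -
    have nn: "\<And>i. 0 \<le> a i * s i + b i" using ann bnn snn by simp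
    have "(\<Sum>i\<in>I. ennreal (a i) * ennreal (s i) + ennreal (b i)) = (\<Sum>i\<in>I. ennreal (a i * s i + b i))"
      using trm snn by simp
    also have "\<dots> = ennreal (\<Sum>i\<in>I. a i * s i + b i)" using nn by (rule sum_ennreal)
    finally show ?thesis using c d nn by (simp add: ennreal_mult sum_nonneg)
  qed
  finally show ?thesis .
qed



lemma final1:
  fixes P S S0 q :: real
  assumes "0 \<le> P" "0 \<le> S0" "S0 \<le> S" "q > 0"
  shows "8 * P\<^sup>2 / q + 40 / q * S0 \<le> (7 * P + 10 * sqrt S)\<^sup>2 / q"
proof -
  have S: "0 \<le> S" using assms by linarith
  have sq: "(sqrt S)\<^sup>2 = S" using S by simp
  have "(7 * P + 10 * sqrt S)\<^sup>2 = 49 * P\<^sup>2 + 140 * (P * sqrt S) + 100 * (sqrt S)\<^sup>2"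
    by (simp add: power2_eq_square algebra_simps)
  also have "\<dots> = 49 * P\<^sup>2 + 140 * (P * sqrt S) + 100 * S" using sq by simp
  finally have e: "(7 * P + 10 * sqrt S)\<^sup>2 = 49 * P\<^sup>2 + 140 * (P * sqrt S) + 100 * S" .
  have "0 \<le> P * sqrt S" using assms S by simp
  hence "8 * P\<^sup>2 + 40 * S0 \<le> (7 * P + 10 * sqrt S)\<^sup>2" unfolding e using assms zero_le_power2[of P] by linarith
  hence "(8 * P\<^sup>2 + 40 * S0) / q \<le> (7 * P + 10 * sqrt S)\<^sup>2 / q" using assms by (intro divide_right_mono) auto
  thus ?thesis by (simp add: add_divide_distrib)
qed

lemma final2:
  fixes D L S S0 q :: real
  assumes "0 \<le> D" "L > 0" "0 \<le> S0" "S0 \<le> S" "q > 0"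
  shows "48 * D\<^sup>2 / q + 132 / (L\<^sup>2 * q) * S0 \<le> 8 * (7 * L * D + 11 * sqrt S)\<^sup>2 / (L\<^sup>2 * q)"
proof -
  have S: "0 \<le> S" using assms by linarith
  have sq: "(sqrt S)\<^sup>2 = S" using S by simp
  have "(7 * L * D + 11 * sqrt S)\<^sup>2 = 49 * (L * D)\<^sup>2 + 154 * ((L * D) * sqrt S) + 121 * (sqrt S)\<^sup>2"
    by (simp add: power2_eq_square algebra_simps)
  also have "\<dots> = 49 * (L * D)\<^sup>2 + 154 * ((L * D) * sqrt S) + 121 * S" using sq by simp
  finally have e: "(7 * L * D + 11 * sqrt S)\<^sup>2 = 49 * (L * D)\<^sup>2 + 154 * ((L * D) * sqrt S) + 121 * S" .
  have "0 \<le> (L * D) * sqrt S" using assms S by simp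
  moreover have "8 * (7 * L * D + 11 * sqrt S)\<^sup>2 = 392 * (L * D)\<^sup>2 + 1232 * ((L * D) * sqrt S) + 968 * S"
    unfolding e by simp
  ultimately have "48 * (L * D)\<^sup>2 + 132 * S0 \<le> 8 * (7 * L * D + 11 * sqrt S)\<^sup>2" using assms zero_le_power2[of "L * D"] by linarith
  hence "(48 * (L * D)\<^sup>2 + 132 * S0) / (L\<^sup>2 * q) \<le> 8 * (7 * L * D + 11 * sqrt S)\<^sup>2 / (L\<^sup>2 * q)"
    using assms by (intro divide_right_mono) auto
  moreover have "(48 * (L * D)\<^sup>2 + 132 * S0) / (L\<^sup>2 * q) = 48 * D\<^sup>2 / q + 132 / (L\<^sup>2 * q) * S0"
    using assms by (simp add: field_simps power2_eq_square)
  ultimately show ?thesis by simp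
qed

lemma sum_sq_le:
  fixes \<sigma> \<gamma> :: "nat \<Rightarrow> real"
  assumes "\<And>i. \<sigma> i \<ge> 0" "\<And>i. \<gamma> i \<ge> 0"
  shows "(\<Sum>i\<in>I. 2 * (real i + 1)\<^sup>2 * ((\<sigma> i)\<^sup>2 / 2) + (real i + 1)\<^sup>2 * (\<gamma> i)\<^sup>2)
         \<le> (\<Sum>i\<in>I. (real i + 1)\<^sup>2 * (\<sigma> i + \<gamma> i)\<^sup>2)"
proof (rule sum_mono)
  fix i
  have "(\<sigma> i)\<^sup>2 + (\<gamma> i)\<^sup>2 \<le> (\<sigma> i + \<gamma> i)\<^sup>2"
    using assms[of i] by (simp add: power2_eq_square algebra_simps)
  hence "(real i + 1)\<^sup>2 * ((\<sigma> i)\<^sup>2 + (\<gamma> i)\<^sup>2) \<le> (real i + 1)\<^sup>2 * (\<sigma> i + \<gamma> i)\<^sup>2"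
    by (intro mult_left_mono) auto
  thus "2 * (real i + 1)\<^sup>2 * ((\<sigma> i)\<^sup>2 / 2) + (real i + 1)\<^sup>2 * (\<gamma> i)\<^sup>2 \<le> (real i + 1)\<^sup>2 * (\<sigma> i + \<gamma> i)\<^sup>2"
    by (simp add: algebra_simps)
qed

lemma sum_sq_nn:
  fixes \<sigma> \<gamma> :: "nat \<Rightarrow> real"
  shows "0 \<le> (\<Sum>i\<in>I. 2 * (real i + 1)\<^sup>2 * ((\<sigma> i)\<^sup>2 / 2) + (real i + 1)\<^sup>2 * (\<gamma> i)\<^sup>2)"
  by (intro sum_nonneg) simp

theorem theorem5:
  fixes M :: "'w measure"
    and E :: "'z::euclidean_space \<Rightarrow> 'z set"
    and Fs :: "nat \<Rightarrow> 'z \<Rightarrow> 'z"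
    and N :: nat and L0 \<alpha> :: real
    and zs z0 :: 'z
    and \<sigma> \<gamma> :: "nat \<Rightarrow> real"
    and z Ft zbar :: "nat \<Rightarrow> 'w \<Rightarrow> 'z"
  assumes prob: "prob_space M"
    and E_mm: "max_monotone_op E"
    and N_pos: "N \<ge> 1"
    and L0_pos: "L0 > 0"
    and Fs_mm: "\<And>i. i < N \<Longrightarrow> max_monotone_op (sv_op (Fs i))"
    and Fs_coco: "\<And>i. i < N \<Longrightarrow> cocoercive (1 / L0) (Fs i)"
    and \<alpha>_pos: "0 < \<alpha>" and \<alpha>_bd: "\<alpha> < 4 / L0"
    and root: "(1 / \<alpha>) *\<^sub>R (zs - resolvent \<alpha> E
                 (zs - \<alpha> *\<^sub>R ((1 / real N) *\<^sub>R (\<Sum>i<N. Fs i zs)))) = 0"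
    and \<sigma>_nn: "\<And>k. \<sigma> k \<ge> 0" and \<gamma>_nn: "\<And>k. \<gamma> k \<ge> 0"
    and z_meas: "\<And>k. z k \<in> borel_measurable M"
    and Ft_meas: "\<And>k. Ft k \<in> borel_measurable M"
    and zbar_meas: "\<And>k. zbar k \<in> borel_measurable M"
    and z_init: "\<And>\<omega>. \<omega> \<in> space M \<Longrightarrow> z 0 \<omega> = z0"
    and est: "\<And>k. (\<integral>\<^sup>+ \<omega>. ennreal ((norm ((1 / real N) *\<^sub>R (\<Sum>i<N. Fs i (z k \<omega>))
                                   - Ft k \<omega>))\<^sup>2) \<partial>M) \<le> ennreal ((\<sigma> k)\<^sup>2 / 2)"
    and inexact: "\<And>k \<omega>. \<omega> \<in> space M \<Longrightarrow>
           norm (resolvent \<alpha> E (z k \<omega> - \<alpha> *\<^sub>R Ft k \<omega>) - zbar k \<omega>)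
             \<le> sqrt 2 / 2 * \<alpha> * \<gamma> k"
    and step: "\<And>k \<omega>. \<omega> \<in> space M \<Longrightarrow>
           z (Suc k) \<omega> = (1 / real (k + 2)) *\<^sub>R z0 + (1 - 1 / real (k + 2)) *\<^sub>R z k \<omega>
             - ((1 - 1 / real (k + 2)) / (4 / (\<alpha> * (4 - \<alpha> * L0))))
                 *\<^sub>R ((1 / \<alpha>) *\<^sub>R (z k \<omega> - zbar k \<omega>))"
  shows "\<forall>k. (\<integral>\<^sup>+ \<omega>. ennreal ((norm ((1 / \<alpha>) *\<^sub>R (z k \<omega> - resolvent \<alpha> E
                 (z k \<omega> - \<alpha> *\<^sub>R ((1 / real N) *\<^sub>R (\<Sum>i<N. Fs i (z k \<omega>)))))))\<^sup>2) \<partial>M)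
           \<le> ennreal ((7 * (4 / (\<alpha> * (4 - \<alpha> * L0))) * norm (z0 - zs)
                  + 10 * sqrt (\<Sum>i<k. (real i + 1)\<^sup>2 * (\<sigma> i + \<gamma> i)\<^sup>2))\<^sup>2
                / ((real k + 1) * (real k + 2)))
         \<and> (\<integral>\<^sup>+ \<omega>. ennreal ((norm (z (Suc k) \<omega> - z k \<omega>))\<^sup>2) \<partial>M)
           \<le> ennreal (8 * (7 * (4 / (\<alpha> * (4 - \<alpha> * L0))) * norm (z0 - zs)
                  + 11 * sqrt (\<Sum>i\<le>k. (real i + 1)\<^sup>2 * (\<sigma> i + \<gamma> i)\<^sup>2))\<^sup>2
                / ((4 / (\<alpha> * (4 - \<alpha> * L0)))\<^sup>2 * (real k + 1) * (real k + 2)))"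


proof -
  define L where "L = 4 / (\<alpha> * (4 - \<alpha> * L0))"
  have aL0: "\<alpha> * L0 < 4" using \<alpha>_bd L0_pos by (simp add: field_simps)
  have Lpos: "L > 0" unfolding L_def using aL0 \<alpha>_pos by simp
  have Linv: "1 / L = \<alpha> * (4 - \<alpha> * L0) / 4" unfolding L_def by simp
  define F where "F = (\<lambda>x. (1 / real N) *\<^sub>R (\<Sum>i<N. Fs i x))"
  define G where "G = (\<lambda>x. (1/\<alpha>) *\<^sub>R (x - resolvent \<alpha> E (x - \<alpha> *\<^sub>R F x)))"
  define D where "D = norm (z0 - zs)"
  have Fc: "cocoercive (1/L0) F" unfolding F_def by (rule avg_cocoercive[OF Fs_coco N_pos L0_pos])
  have Gc: "\<And>x y. (1/L) * (norm (G x - G y))\<^sup>2 \<le> inner (G x - G y) (x - y)"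
    unfolding Linv G_def by (rule G_cocoercive[OF E_mm \<alpha>_pos L0_pos \<alpha>_bd Fc])
  define g where "g = (\<lambda>x. (1/L) *\<^sub>R G x)"
  have gc: "\<And>x y. (norm (g x - g y))\<^sup>2 \<le> inner (g x - g y) (x - y)"
  proof -
    fix x y
    have gd: "g x - g y = (1/L) *\<^sub>R (G x - G y)" unfolding g_def by (simp add: scaleR_diff_right)
    have e1: "(norm (g x - g y))\<^sup>2 = (1/L) * ((1/L) * (norm (G x - G y))\<^sup>2)"
      unfolding gd using Lpos by (simp add: power_mult_distrib power2_eq_square)
    have e2: "inner (g x - g y) (x - y) = (1/L) * inner (G x - G y) (x - y)" unfolding gd by simp
    have m: "(1/L) * ((1/L) * (norm (G x - G y))\<^sup>2) \<le> (1/L) * inner (G x - G y) (x - y)"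
      using Gc[of x y] Lpos by (intro mult_left_mono) auto
    show "(norm (g x - g y))\<^sup>2 \<le> inner (g x - g y) (x - y)" unfolding e1 e2 by (rule m)
  qed
  have groot: "g zs = 0" using root unfolding g_def G_def F_def by simp
  have Fsc: "\<And>i. i < N \<Longrightarrow> continuous_on UNIV (Fs i)"
    using Fs_coco L0_pos by (intro coco_continuous[of "1/L0"]) auto
  have Fcont: "continuous_on UNIV F" unfolding F_def
    by (intro continuous_on_scaleR continuous_on_const continuous_on_sum) (use Fsc in auto)
  define e where "e = (\<lambda>k \<omega>. (1/\<alpha>) *\<^sub>R (z k \<omega> - zbar k \<omega>) - G (z k \<omega>))"
  define h where "h = (\<lambda>i \<omega>. (norm (F (z i \<omega>) - Ft i \<omega>))\<^sup>2)"
  have hm: "\<And>i. (\<lambda>\<omega>. h i \<omega>) \<in> borel_measurable M"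
  proof -
    fix i
    have "(\<lambda>\<omega>. F (z i \<omega>)) \<in> borel_measurable M" by (rule borel_measurable_continuous_on[OF Fcont z_meas])
    hence "(\<lambda>\<omega>. F (z i \<omega>) - Ft i \<omega>) \<in> borel_measurable M" using Ft_meas[of i] by measurable
    thus "(\<lambda>\<omega>. h i \<omega>) \<in> borel_measurable M" unfolding h_def by measurable
  qed
  have hnn: "\<And>i \<omega>. 0 \<le> h i \<omega>" unfolding h_def by simp
  have hs: "\<And>i. (\<integral>\<^sup>+\<omega>. ennreal (h i \<omega>) \<partial>M) \<le> ennreal ((\<sigma> i)\<^sup>2 / 2)"
    using est unfolding h_def F_def .
  have err: "\<And>k \<omega>. \<omega> \<in> space M \<Longrightarrow> (norm (e k \<omega>))\<^sup>2 \<le> 2 * h k \<omega> + (\<gamma> k)\<^sup>2"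
  proof -
    fix k \<omega> assume \<omega>: "\<omega> \<in> space M"
    define zk where "zk = z k \<omega>"
    define J where "J = resolvent \<alpha> E"
    have ee: "e k \<omega> = (1/\<alpha>) *\<^sub>R ((J (zk - \<alpha> *\<^sub>R F zk) - J (zk - \<alpha> *\<^sub>R Ft k \<omega>))
                                  + (J (zk - \<alpha> *\<^sub>R Ft k \<omega>) - zbar k \<omega>))"
      unfolding e_def G_def zk_def J_def by (simp add: algebra_simps)
    have n1: "norm (J (zk - \<alpha> *\<^sub>R F zk) - J (zk - \<alpha> *\<^sub>R Ft k \<omega>)) \<le> \<alpha> * norm (F zk - Ft k \<omega>)"
    proof -
      have "norm (J (zk - \<alpha> *\<^sub>R F zk) - J (zk - \<alpha> *\<^sub>R Ft k \<omega>)) \<le> norm ((zk - \<alpha> *\<^sub>R F zk) - (zk - \<alpha> *\<^sub>R Ft k \<omega>))"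
        unfolding J_def by (rule resolvent_nonexp[OF E_mm \<alpha>_pos])
      also have "(zk - \<alpha> *\<^sub>R F zk) - (zk - \<alpha> *\<^sub>R Ft k \<omega>) = - (\<alpha> *\<^sub>R (F zk - Ft k \<omega>))"
        by (simp add: algebra_simps)
      finally show ?thesis using \<alpha>_pos by simp
    qed
    have n2: "norm (J (zk - \<alpha> *\<^sub>R Ft k \<omega>) - zbar k \<omega>) \<le> sqrt 2 / 2 * \<alpha> * \<gamma> k"
      using inexact[OF \<omega>, of k] unfolding J_def zk_def .
    define A where "A = J (zk - \<alpha> *\<^sub>R F zk) - J (zk - \<alpha> *\<^sub>R Ft k \<omega>)"
    define B where "B = J (zk - \<alpha> *\<^sub>R Ft k \<omega>) - zbar k \<omega>"
    have "norm (e k \<omega>) = (1/\<alpha>) * norm (A + B)" unfolding ee A_def[symmetric] B_def[symmetric]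
      using \<alpha>_pos by simp
    also have "\<dots> \<le> (1/\<alpha>) * (norm A + norm B)" using \<alpha>_pos by (intro mult_left_mono norm_triangle_ineq) auto
    finally have "norm (e k \<omega>) \<le> (1/\<alpha>) * (norm (J (zk - \<alpha> *\<^sub>R F zk) - J (zk - \<alpha> *\<^sub>R Ft k \<omega>))
                                  + norm (J (zk - \<alpha> *\<^sub>R Ft k \<omega>) - zbar k \<omega>))"
      unfolding A_def B_def .
    also have "\<dots> \<le> (1/\<alpha>) * (\<alpha> * norm (F zk - Ft k \<omega>) + sqrt 2 / 2 * \<alpha> * \<gamma> k)"
      using n1 n2 \<alpha>_pos by (intro mult_left_mono add_mono) auto
    also have "\<dots> = norm (F zk - Ft k \<omega>) + sqrt 2 / 2 * \<gamma> k" using \<alpha>_pos by (simp add: field_simps)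
    finally have ne: "norm (e k \<omega>) \<le> norm (F zk - Ft k \<omega>) + sqrt 2 / 2 * \<gamma> k" .
    have "(norm (e k \<omega>))\<^sup>2 \<le> (norm (F zk - Ft k \<omega>) + sqrt 2 / 2 * \<gamma> k)\<^sup>2"
      using ne by (simp add: power_mono)
    also have "\<dots> \<le> 2 * (norm (F zk - Ft k \<omega>))\<^sup>2 + 2 * (sqrt 2 / 2 * \<gamma> k)\<^sup>2"
    proof -
      have "0 \<le> (norm (F zk - Ft k \<omega>) - sqrt 2 / 2 * \<gamma> k)\<^sup>2" by simp
      thus ?thesis by (simp add: power2_eq_square algebra_simps)
    qed
    also have "2 * (sqrt 2 / 2 * \<gamma> k)\<^sup>2 = (\<gamma> k)\<^sup>2" by (simp add: power_mult_distrib power_divide)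
    finally show "(norm (e k \<omega>))\<^sup>2 \<le> 2 * h k \<omega> + (\<gamma> k)\<^sup>2" unfolding h_def zk_def by simp
  qed
  have det: "\<And>\<omega> k. \<omega> \<in> space M \<Longrightarrow>
      (real k + 1) * (real k + 2) * (norm (g (z k \<omega>)))\<^sup>2
           \<le> 8 * (norm (z0 - zs))\<^sup>2 + 40 * (\<Sum>i<k. (real i + 1)\<^sup>2 * (norm ((1/L) *\<^sub>R e i \<omega>))\<^sup>2)
      \<and> (real k + 1) * (real k + 2) * (norm (z (Suc k) \<omega> - z k \<omega>))\<^sup>2
           \<le> 48 * (norm (z0 - zs))\<^sup>2 + 132 * (\<Sum>i<Suc k. (real i + 1)\<^sup>2 * (norm ((1/L) *\<^sub>R e i \<omega>))\<^sup>2)"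
  proof -
    fix \<omega> k assume \<omega>: "\<omega> \<in> space M"
    have st: "\<And>k. z (Suc k) \<omega> = (1 / real (k+2)) *\<^sub>R z0 + (1 - 1/real (k+2)) *\<^sub>R (z k \<omega> - g (z k \<omega>) - (1/L) *\<^sub>R e k \<omega>)"
    proof -
      fix k
      define v where "v = (1/\<alpha>) *\<^sub>R (z k \<omega> - zbar k \<omega>)"
      define c where "c = 1 - 1 / real (k + 2)"
      define bb where "bb = 1 / real (k + 2)"
      have ge: "g (z k \<omega>) + (1/L) *\<^sub>R e k \<omega> = (1/L) *\<^sub>R v"
        unfolding g_def e_def v_def by (simp add: algebra_simps)
      have "z (Suc k) \<omega> = bb *\<^sub>R z0 + c *\<^sub>R z k \<omega> - (c / L) *\<^sub>R v"
        using step[OF \<omega>, of k] unfolding L_def[symmetric] v_def c_def bb_def .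
      also have "(c / L) *\<^sub>R v = c *\<^sub>R ((1/L) *\<^sub>R v)" by simp
      also have "bb *\<^sub>R z0 + c *\<^sub>R z k \<omega> - c *\<^sub>R ((1/L) *\<^sub>R v)
                 = bb *\<^sub>R z0 + c *\<^sub>R (z k \<omega> - g (z k \<omega>) - (1/L) *\<^sub>R e k \<omega>)"
      proof -
        have eqv: "z k \<omega> - g (z k \<omega>) - (1/L) *\<^sub>R e k \<omega> = z k \<omega> - (1/L) *\<^sub>R v"
          using ge by (metis diff_diff_eq)
        show ?thesis unfolding eqv scaleR_diff_right by (rule add_diff_eq[symmetric])
      qed
      finally show "z (Suc k) \<omega> = (1 / real (k+2)) *\<^sub>R z0 + (1 - 1/real (k+2)) *\<^sub>R (z k \<omega> - g (z k \<omega>) - (1/L) *\<^sub>R e k \<omega>)"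
        unfolding c_def bb_def .
    qed
    show "?thesis \<omega> k"
      using halpern_det[where g=g and z="\<lambda>k. z k \<omega>" and \<delta>="\<lambda>k. (1/L) *\<^sub>R e k \<omega>", OF gc groot z_init[OF \<omega>] st]
      by blast
  qed
  show ?thesis
  proof (intro allI conjI)
    fix k
    define q where "q = (real k + 1) * (real k + 2)"
    have q0: "q > 0" unfolding q_def by simp
    define a where "a = (\<lambda>i::nat. 2 * (real i + 1)\<^sup>2)"
    define b where "b = (\<lambda>i::nat. (real i + 1)\<^sup>2 * (\<gamma> i)\<^sup>2)"
    have ebound: "\<And>\<omega> I. \<omega> \<in> space M \<Longrightarrow> (\<Sum>i\<in>I. (real i + 1)\<^sup>2 * (norm (e i \<omega>))\<^sup>2) \<le> (\<Sum>i\<in>I. a i * h i \<omega> + b i)"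
    proof -
      fix \<omega> and I :: "nat set" assume \<omega>: "\<omega> \<in> space M"
      show "(\<Sum>i\<in>I. (real i + 1)\<^sup>2 * (norm (e i \<omega>))\<^sup>2) \<le> (\<Sum>i\<in>I. a i * h i \<omega> + b i)"
      proof (rule sum_mono)
        fix i
        have "(real i + 1)\<^sup>2 * (norm (e i \<omega>))\<^sup>2 \<le> (real i + 1)\<^sup>2 * (2 * h i \<omega> + (\<gamma> i)\<^sup>2)"
          using err[OF \<omega>, of i] by (intro mult_left_mono) auto
        thus "(real i + 1)\<^sup>2 * (norm (e i \<omega>))\<^sup>2 \<le> a i * h i \<omega> + b i"
          unfolding a_def b_def by (simp add: algebra_simps)
      qed
    qed
    have scl: "\<And>x. (norm ((1/L) *\<^sub>R x))\<^sup>2 = (norm x)\<^sup>2 / L\<^sup>2"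
      using Lpos by (simp add: power_mult_distrib power_divide)
    have pw1: "\<And>\<omega>. \<omega> \<in> space M \<Longrightarrow> (norm (G (z k \<omega>)))\<^sup>2 \<le> 8 * (L * D)\<^sup>2 / q + 40 / q * (\<Sum>i<k. a i * h i \<omega> + b i)"
    proof -
      fix \<omega> assume \<omega>: "\<omega> \<in> space M"
      have d1: "q * (norm (g (z k \<omega>)))\<^sup>2 \<le> 8 * D\<^sup>2 + 40 * (\<Sum>i<k. (real i + 1)\<^sup>2 * ((norm (e i \<omega>))\<^sup>2 / L\<^sup>2))"
        using det[OF \<omega>, of k] unfolding q_def D_def scl by simp
      have gG: "(norm (g (z k \<omega>)))\<^sup>2 = (norm (G (z k \<omega>)))\<^sup>2 / L\<^sup>2" unfolding g_def by (rule scl)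
      have "(\<Sum>i<k. (real i + 1)\<^sup>2 * ((norm (e i \<omega>))\<^sup>2 / L\<^sup>2)) = (\<Sum>i<k. (real i + 1)\<^sup>2 * (norm (e i \<omega>))\<^sup>2) / L\<^sup>2"
        by (simp add: sum_divide_distrib)
      hence "q * ((norm (G (z k \<omega>)))\<^sup>2 / L\<^sup>2) \<le> 8 * D\<^sup>2 + 40 * ((\<Sum>i<k. (real i + 1)\<^sup>2 * (norm (e i \<omega>))\<^sup>2) / L\<^sup>2)"
        using d1 gG by simp
      hence "q * (norm (G (z k \<omega>)))\<^sup>2 \<le> 8 * (L * D)\<^sup>2 + 40 * (\<Sum>i<k. (real i + 1)\<^sup>2 * (norm (e i \<omega>))\<^sup>2)"
        using Lpos by (simp add: field_simps power_mult_distrib)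
      also have "\<dots> \<le> 8 * (L * D)\<^sup>2 + 40 * (\<Sum>i<k. a i * h i \<omega> + b i)"
        using ebound[OF \<omega>, of "{..<k}"] by simp
      finally show "(norm (G (z k \<omega>)))\<^sup>2 \<le> 8 * (L * D)\<^sup>2 / q + 40 / q * (\<Sum>i<k. a i * h i \<omega> + b i)"
        using q0 by (simp add: field_simps)
    qed
    have "(\<integral>\<^sup>+\<omega>. ennreal ((norm (G (z k \<omega>)))\<^sup>2) \<partial>M)
        \<le> (\<integral>\<^sup>+\<omega>. ennreal (8 * (L * D)\<^sup>2 / q + 40 / q * (\<Sum>i<k. a i * h i \<omega> + b i)) \<partial>M)"
      using pw1 by (intro nn_integral_mono ennreal_leI) auto
    also have "\<dots> \<le> ennreal (8 * (L * D)\<^sup>2 / q + 40 / q * (\<Sum>i<k. a i * ((\<sigma> i)\<^sup>2 / 2) + b i))"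
      using q0 by (intro integral_bound_sum[OF prob] hm hnn hs) (auto simp: a_def b_def)
    also have "\<dots> \<le> ennreal ((7 * L * D + 10 * sqrt (\<Sum>i<k. (real i + 1)\<^sup>2 * (\<sigma> i + \<gamma> i)\<^sup>2))\<^sup>2 / q)"
    proof (rule ennreal_leI)
      show "8 * (L * D)\<^sup>2 / q + 40 / q * (\<Sum>i<k. a i * ((\<sigma> i)\<^sup>2 / 2) + b i)
            \<le> (7 * L * D + 10 * sqrt (\<Sum>i<k. (real i + 1)\<^sup>2 * (\<sigma> i + \<gamma> i)\<^sup>2))\<^sup>2 / q"
        using final1[of "L * D" "\<Sum>i<k. a i * ((\<sigma> i)\<^sup>2 / 2) + b i" "\<Sum>i<k. (real i + 1)\<^sup>2 * (\<sigma> i + \<gamma> i)\<^sup>2" q]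
          Lpos q0 sum_sq_le[OF \<sigma>_nn \<gamma>_nn, where I="{..<k}"] sum_sq_nn[where \<sigma>=\<sigma> and \<gamma>=\<gamma> and I="{..<k}"]
        unfolding a_def b_def D_def by (simp add: mult.assoc)
    qed
    finally show "(\<integral>\<^sup>+ \<omega>. ennreal ((norm ((1 / \<alpha>) *\<^sub>R (z k \<omega> - resolvent \<alpha> E
                 (z k \<omega> - \<alpha> *\<^sub>R ((1 / real N) *\<^sub>R (\<Sum>i<N. Fs i (z k \<omega>)))))))\<^sup>2) \<partial>M)
           \<le> ennreal ((7 * (4 / (\<alpha> * (4 - \<alpha> * L0))) * norm (z0 - zs)
                  + 10 * sqrt (\<Sum>i<k. (real i + 1)\<^sup>2 * (\<sigma> i + \<gamma> i)\<^sup>2))\<^sup>2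
                / ((real k + 1) * (real k + 2)))"
      unfolding G_def F_def L_def D_def q_def by simp
    have pw2: "\<And>\<omega>. \<omega> \<in> space M \<Longrightarrow> (norm (z (Suc k) \<omega> - z k \<omega>))\<^sup>2
                 \<le> 48 * D\<^sup>2 / q + 132 / (L\<^sup>2 * q) * (\<Sum>i<Suc k. a i * h i \<omega> + b i)"
    proof -
      fix \<omega> assume \<omega>: "\<omega> \<in> space M"
      define SE where "SE = (\<Sum>i<Suc k. (real i + 1)\<^sup>2 * (norm (e i \<omega>))\<^sup>2)"
      define SH where "SH = (\<Sum>i<Suc k. a i * h i \<omega> + b i)"
      define Dz where "Dz = (norm (z (Suc k) \<omega> - z k \<omega>))\<^sup>2"
      have eqs: "(\<Sum>i<Suc k. (real i + 1)\<^sup>2 * (norm ((1/L) *\<^sub>R e i \<omega>))\<^sup>2) = SE / L\<^sup>2"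
        unfolding SE_def scl by (simp only: sum_divide_distrib times_divide_eq_right)
      have d2: "q * Dz \<le> 48 * D\<^sup>2 + 132 * (SE / L\<^sup>2)"
        using det[OF \<omega>, of k] unfolding q_def D_def Dz_def eqs by simp
      have "SE \<le> SH" unfolding SE_def SH_def by (rule ebound[OF \<omega>])
      hence "132 * (SE / L\<^sup>2) \<le> 132 * (SH / L\<^sup>2)" using Lpos by (simp add: divide_right_mono)
      hence "q * Dz \<le> 48 * D\<^sup>2 + 132 * (SH / L\<^sup>2)" using d2 by linarith
      hence "Dz \<le> 48 * D\<^sup>2 / q + 132 / (L\<^sup>2 * q) * SH"
        using q0 Lpos by (simp add: field_simps)
      thus "(norm (z (Suc k) \<omega> - z k \<omega>))\<^sup>2 \<le> 48 * D\<^sup>2 / q + 132 / (L\<^sup>2 * q) * (\<Sum>i<Suc k. a i * h i \<omega> + b i)"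
        unfolding Dz_def SH_def .
    qed
    have "(\<integral>\<^sup>+\<omega>. ennreal ((norm (z (Suc k) \<omega> - z k \<omega>))\<^sup>2) \<partial>M)
        \<le> (\<integral>\<^sup>+\<omega>. ennreal (48 * D\<^sup>2 / q + 132 / (L\<^sup>2 * q) * (\<Sum>i<Suc k. a i * h i \<omega> + b i)) \<partial>M)"
      using pw2 by (intro nn_integral_mono ennreal_leI) auto
    also have "\<dots> \<le> ennreal (48 * D\<^sup>2 / q + 132 / (L\<^sup>2 * q) * (\<Sum>i<Suc k. a i * ((\<sigma> i)\<^sup>2 / 2) + b i))"
      using q0 Lpos by (intro integral_bound_sum[OF prob] hm hnn hs) (auto simp: a_def b_def)
    also have "\<dots> \<le> ennreal (8 * (7 * L * D + 11 * sqrt (\<Sum>i\<le>k. (real i + 1)\<^sup>2 * (\<sigma> i + \<gamma> i)\<^sup>2))\<^sup>2 / (L\<^sup>2 * q))"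
    proof (rule ennreal_leI)
      define S0 where "S0 = (\<Sum>i<Suc k. a i * ((\<sigma> i)\<^sup>2 / 2) + b i)"
      define S1 where "S1 = (\<Sum>i<Suc k. (real i + 1)\<^sup>2 * (\<sigma> i + \<gamma> i)\<^sup>2)"
      have S01: "S0 \<le> S1" unfolding S0_def S1_def a_def b_def by (rule sum_sq_le[OF \<sigma>_nn \<gamma>_nn])
      have S0nn: "0 \<le> S0" unfolding S0_def a_def b_def by (rule sum_sq_nn)
      have S1e: "(\<Sum>i\<le>k. (real i + 1)\<^sup>2 * (\<sigma> i + \<gamma> i)\<^sup>2) = S1"
        unfolding S1_def lessThan_Suc_atMost ..
      have Dnn: "0 \<le> D" unfolding D_def by simp
      show "48 * D\<^sup>2 / q + 132 / (L\<^sup>2 * q) * (\<Sum>i<Suc k. a i * ((\<sigma> i)\<^sup>2 / 2) + b i)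
            \<le> 8 * (7 * L * D + 11 * sqrt (\<Sum>i\<le>k. (real i + 1)\<^sup>2 * (\<sigma> i + \<gamma> i)\<^sup>2))\<^sup>2 / (L\<^sup>2 * q)"
        using final2[OF Dnn Lpos S0nn S01 q0] unfolding S1e S0_def .
    qed
    finally show "(\<integral>\<^sup>+ \<omega>. ennreal ((norm (z (Suc k) \<omega> - z k \<omega>))\<^sup>2) \<partial>M)
           \<le> ennreal (8 * (7 * (4 / (\<alpha> * (4 - \<alpha> * L0))) * norm (z0 - zs)
                  + 11 * sqrt (\<Sum>i\<le>k. (real i + 1)\<^sup>2 * (\<sigma> i + \<gamma> i)\<^sup>2))\<^sup>2
                / ((4 / (\<alpha> * (4 - \<alpha> * L0)))\<^sup>2 * (real k + 1) * (real k + 2)))"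
      unfolding L_def D_def q_def by (simp add: mult.assoc)
  qed
qed

end
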